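(* Let $d\ge3$. The collection of all universally simplified $d$-dimensional copulas is dense in $(\mathcal{C}^d,d_\infty)$.
   Context: $\mathcal{C}^d$ is the set of $d$-dimensional copulas and $d_\infty(C_1,C_2)=\max_{\mathbf{x}\in[0,1]^d}|C_1(\mathbf{x})-C_2(\mathbf{x})|$. For $C\in\mathcal{C}^d$ and $J\subseteq\{1,\dots,d\}$, $C_J$ is the marginal copula of the coordinates in $J$ and $\mu_{C_J}$ its measure. For $J$ with $2\le|J|\le d$ and $L\subseteq J$ with $1\le|L|\le|J|-2$, let $K_{C_J}(\mathbf{t},\cdot)$ be (a version of) the regular conditional distribution of the coordinates in $J\setminus L$ given the coordinates in $L$ equal $\mathbf{t}$, and $F_{j|L}(\cdot|\mathbf{t})$, $j\in J\setminus L$, its univariate marginal distribution functions. $C$ is universally simplified if for all such $J,L$ (with $J\setminus L=\{j_1<\dots<j_m\}$): (U1) there is an $m$-dimensional copula $A$ with $C_J(\mathbf{u})=\int_{[\mathbf{0},\mathbf{u}_L]}A(F_{j_1|L}(u_{j_1}|\mathbf{t}),\dots,F_{j_m|L}(u_{j_m}|\mathbf{t}))\,d\mu_{C_L}(\mathbf{t})$ for all $\mathbf{u}$, where $\mathbf{u}_L$ is the subvector of coordinates in $L$; and (U2) $F_{j|L}(\cdot|\mathbf{t})$ is continuous for $\mu_{C_L}$-a.e. $\mathbf{t}$, for each $j\in J\setminus L$. *)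

theory Defs
  imports "HOL-Probability.Probability"
begin

text \<open>Points of [0,1]^I are functions nat => real; only the coordinates in the
  index set I matter.  A copula on index set I is identified with its
  probability measure on the product of Borel sigma-algebras over I
  (uniform univariate margins); its copula function is its distribution function.\<close>

definition cube :: "nat set \<Rightarrow> (nat \<Rightarrow> real) set" where
  "cube I = {u. \<forall>i\<in>I. 0 \<le> u i \<and> u i \<le> 1}"

definition cdf_on :: "nat set \<Rightarrow> (nat \<Rightarrow> real) measure \<Rightarrow> (nat \<Rightarrow> real) \<Rightarrow> real" where
  "cdf_on I \<mu> u = measure \<mu> {x \<in> space \<mu>. \<forall>i\<in>I. x i \<le> u i}"

definition copula_on :: "nat set \<Rightarrow> (nat \<Rightarrow> real) measure \<Rightarrow> bool" where
  "copula_on I \<mu> \<longleftrightarrow> prob_space \<mu> \<and> sets \<mu> = sets (\<Pi>\<^sub>M i\<in>I. borel) \<and>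
     (\<forall>i\<in>I. \<forall>s\<in>{0..1}. measure \<mu> {x \<in> space \<mu>. x i \<le> s} = s)"

definition copula_dist :: "nat \<Rightarrow> (nat \<Rightarrow> real) measure \<Rightarrow> (nat \<Rightarrow> real) measure \<Rightarrow> real" where
  "copula_dist d \<mu> \<nu> = (SUP u\<in>cube {1..d}. \<bar>cdf_on {1..d} \<mu> u - cdf_on {1..d} \<nu> u\<bar>)"

definition marg :: "nat set \<Rightarrow> (nat \<Rightarrow> real) measure \<Rightarrow> (nat \<Rightarrow> real) measure" where
  "marg J \<mu> = distr \<mu> (\<Pi>\<^sub>M i\<in>J. borel) (\<lambda>x. restrict x J)"

text \<open>K is (a version of) the regular conditional distribution of the coordinates
  in M given the coordinates in L, for a measure \<nu> on the coordinates L \<union> M.\<close>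
definition is_rcd :: "nat set \<Rightarrow> nat set \<Rightarrow> (nat \<Rightarrow> real) measure
    \<Rightarrow> ((nat \<Rightarrow> real) \<Rightarrow> (nat \<Rightarrow> real) measure) \<Rightarrow> bool" where
  "is_rcd L M \<nu> K \<longleftrightarrow>
     K \<in> measurable (\<Pi>\<^sub>M i\<in>L. borel) (prob_algebra (\<Pi>\<^sub>M i\<in>M. borel)) \<and>
     \<nu> = bind (marg L \<nu>) (\<lambda>t. distr (K t) (\<Pi>\<^sub>M i\<in>L \<union> M. borel) (\<lambda>y. merge L M (t, y)))"

definition cond_df :: "((nat \<Rightarrow> real) \<Rightarrow> (nat \<Rightarrow> real) measure) \<Rightarrow> nat \<Rightarrow> (nat \<Rightarrow> real) \<Rightarrow> real \<Rightarrow> real" where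
  "cond_df K j t s = measure (K t) {y \<in> space (K t). y j \<le> s}"

definition univ_simplified :: "nat \<Rightarrow> (nat \<Rightarrow> real) measure \<Rightarrow> bool" where
  "univ_simplified d \<mu> \<longleftrightarrow>
    (\<forall>J L K. J \<subseteq> {1..d} \<and> 2 \<le> card J \<and> L \<subseteq> J \<and> 1 \<le> card L \<and> card L \<le> card J - 2 \<and>
       is_rcd L (J - L) (marg J \<mu>) K \<longrightarrow>
       \<comment> \<open>(U1)\<close>
       (\<exists>A. copula_on (J - L) A \<and>
          (\<forall>u\<in>cube J. cdf_on J (marg J \<mu>) u =
             (\<integral>t. indicator {t. \<forall>l\<in>L. 0 \<le> t l \<and> t l \<le> u l} t *
                    cdf_on (J - L) A (\<lambda>j. cond_df K j t (u j)) \<partial>(marg L \<mu>)))) \<and>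
       \<comment> \<open>(U2)\<close>
       (\<forall>j\<in>J - L. AE t in marg L \<mu>. continuous_on UNIV (cond_df K j t)))"

end

theory Submission
  imports Defs
begin

lemma copula_basic:
  assumes "copula_on I P"
  shows "prob_space P" "sets P = sets (PiM I (\<lambda>_. borel))" "space P = PiE I (\<lambda>_. UNIV)"
proof -
  show "prob_space P" "sets P = sets (PiM I (\<lambda>_. borel))" using assms unfolding copula_on_def by auto
  then have "space P = space (PiM I (\<lambda>_. borel))" by (intro sets_eq_imp_space_eq) simp
  then show "space P = PiE I (\<lambda>_. UNIV)" by (simp add: space_PiM)
qed

lemma copula_PiE_sets:
  assumes "copula_on I P" "finite I" "\<And>i. i \<in> I \<Longrightarrow> A i \<in> sets borel"
  shows "PiE I A \<in> sets P"
  using copula_basic(2)[OF assms(1)] sets_PiM_I_finite[OF assms(2), of A "\<lambda>_. borel"] assms(3) by simp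

lemma copula_margin:
  assumes "copula_on I P" "i \<in> I" "0 \<le> s" "s \<le> 1"
  shows "measure P {x\<in>space P. x i \<le> s} = s"
  using assms unfolding copula_on_def by auto

lemma copula_slab_set:
  assumes "copula_on I P" "finite I" "i \<in> I"
  shows "{x\<in>space P. x i \<le> s} = PiE I (\<lambda>k. if k = i then {..s} else UNIV)"
    and "{x\<in>space P. x i \<le> s} \<in> sets P"
proof -
  show 1: "{x\<in>space P. x i \<le> s} = PiE I (\<lambda>k. if k = i then {..s} else UNIV)"
    using copula_basic(3)[OF assms(1)] assms(3) by (auto simp: PiE_def Pi_def)
  show "{x\<in>space P. x i \<le> s} \<in> sets P" unfolding 1
    by (rule copula_PiE_sets[OF assms(1,2)]) auto
qed

lemma copula_slab:
  assumes "copula_on I P" "finite I" "i \<in> I" "0 \<le> a" "a \<le> b" "b \<le> 1"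
  shows "measure P {x\<in>space P. a < x i \<and> x i \<le> b} = b - a"
proof -
  interpret prob_space P using copula_basic(1)[OF assms(1)] .
  have "{x\<in>space P. a < x i \<and> x i \<le> b} = {x\<in>space P. x i \<le> b} - {x\<in>space P. x i \<le> a}" by auto
  moreover have "measure P ({x\<in>space P. x i \<le> b} - {x\<in>space P. x i \<le> a}) =
     measure P {x\<in>space P. x i \<le> b} - measure P {x\<in>space P. x i \<le> a}"
    using assms by (intro finite_measure_Diff copula_slab_set) auto
  ultimately show ?thesis using copula_margin[OF assms(1,3)] assms by simp
qed

lemma cdf_on_mono:
  assumes "copula_on I P" "finite I" "\<And>i. i \<in> I \<Longrightarrow> u i \<le> v i"
  shows "cdf_on I P u \<le> cdf_on I P v"
proof -
  interpret prob_space P using copula_basic(1)[OF assms(1)] .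
  have "{x\<in>space P. \<forall>i\<in>I. x i \<le> v i} = PiE I (\<lambda>i. {..v i})"
    using copula_basic(3)[OF assms(1)] by (auto simp: PiE_def Pi_def)
  then have "{x\<in>space P. \<forall>i\<in>I. x i \<le> v i} \<in> sets P"
    using copula_PiE_sets[OF assms(1,2)] by simp
  then show ?thesis unfolding cdf_on_def
    using assms(3) by (intro finite_measure_mono) (auto intro: order_trans)
qed

lemma grid_bound:
  assumes cop: "copula_on {1..d} P" and n: "0 < n" and u: "u \<in> cube {1..d}"
  defines "a \<equiv> \<lambda>i. min (n-1) (nat \<lfloor>real n * u i\<rfloor>)"
  shows "cdf_on {1..d} P (\<lambda>i. real (a i) / n) \<le> cdf_on {1..d} P u"
    and "cdf_on {1..d} P u \<le> cdf_on {1..d} P (\<lambda>i. real (a i) / n) + real d / n"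
proof -
  interpret prob_space P using copula_basic(1)[OF cop] .
  have u01: "0 \<le> u i" "u i \<le> 1" if "i \<in> {1..d}" for i using u that unfolding cube_def by auto
  have lo: "real (a i) / n \<le> u i" if "i \<in> {1..d}" for i
  proof -
    have "real (a i) \<le> real (nat \<lfloor>real n * u i\<rfloor>)" unfolding a_def by simp
    also have "\<dots> \<le> real n * u i" using u01[OF that] by (simp add: of_nat_nat)
    finally show ?thesis using n by (simp add: field_simps)
  qed
  have hi: "u i \<le> (real (a i) + 1) / n" and an: "a i + 1 \<le> n" if "i \<in> {1..d}" for i
  proof -
    show "a i + 1 \<le> n" unfolding a_def using n by simp
    show "u i \<le> (real (a i) + 1) / n"
    proof (cases "nat \<lfloor>real n * u i\<rfloor> \<le> n - 1")
      case True
      then have "a i = nat \<lfloor>real n * u i\<rfloor>" unfolding a_def by simp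
      moreover have "real n * u i < real (nat \<lfloor>real n * u i\<rfloor>) + 1"
        using u01[OF that] by (simp add: of_nat_nat)
      ultimately show ?thesis using n by (simp add: field_simps)
    next
      case False
      then have "a i = n - 1" unfolding a_def by simp
      then have "a i + 1 = n" using n by simp
      then have "real (a i + 1) = real n" by (simp only:)
      then have r: "real (a i) + 1 = real n" by simp
      have "(real (a i) + 1) / n = 1" unfolding r using n by simp
      then show ?thesis using u01[OF that] by simp
    qed
  qed
  show "cdf_on {1..d} P (\<lambda>i. real (a i) / n) \<le> cdf_on {1..d} P u"
    by (rule cdf_on_mono[OF cop]) (auto intro: lo)
  have "cdf_on {1..d} P u \<le> cdf_on {1..d} P (\<lambda>i. (real (a i) + 1) / n)"
    by (rule cdf_on_mono[OF cop]) (auto intro: hi)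
  also have "\<dots> \<le> cdf_on {1..d} P (\<lambda>i. real (a i) / n) + real d / n"
  proof -
    let ?A = "{x\<in>space P. \<forall>i\<in>{1..d}. x i \<le> real (a i) / n}"
    let ?S = "\<lambda>i. {x\<in>space P. real (a i) / n < x i \<and> x i \<le> (real (a i) + 1) / n}"
    have sub: "{x\<in>space P. \<forall>i\<in>{1..d}. x i \<le> (real (a i) + 1) / n} \<subseteq> ?A \<union> (\<Union>i\<in>{1..d}. ?S i)"
    proof
      fix x assume x: "x \<in> {x\<in>space P. \<forall>i\<in>{1..d}. x i \<le> (real (a i) + 1) / n}"
      show "x \<in> ?A \<union> (\<Union>i\<in>{1..d}. ?S i)"
      proof (cases "\<forall>i\<in>{1..d}. x i \<le> real (a i) / n")
        case True then show ?thesis using x by blast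
      next
        case False
        then obtain i where "i \<in> {1..d}" "\<not> x i \<le> real (a i) / n" by blast
        then show ?thesis using x by force
      qed
    qed
    have spP: "space P = PiE {1..d} (\<lambda>_. UNIV)" using copula_basic(3)[OF cop] .
    have Am: "?A \<in> events"
    proof -
      have "?A = PiE {1..d} (\<lambda>i. {..real (a i) / n})" using spP by (auto simp: PiE_def Pi_def)
      then show ?thesis using copula_PiE_sets[OF cop] by simp
    qed
    have Sm: "?S i \<in> events" if "i \<in> {1..d}" for i
    proof -
      have "?S i = PiE {1..d} (\<lambda>k. if k = i then {real (a i) / n <.. (real (a i) + 1) / n} else UNIV)"
        using spP that by (auto simp: PiE_def Pi_def)
      then show ?thesis using copula_PiE_sets[OF cop] by simp
    qed
    have "measure P {x\<in>space P. \<forall>i\<in>{1..d}. x i \<le> (real (a i) + 1) / n}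
        \<le> measure P (?A \<union> (\<Union>i\<in>{1..d}. ?S i))"
      using sub Am Sm by (intro finite_measure_mono) auto
    also have "\<dots> \<le> measure P ?A + measure P (\<Union>i\<in>{1..d}. ?S i)"
      using Am Sm by (intro measure_Un_le) auto
    also have "measure P (\<Union>i\<in>{1..d}. ?S i) \<le> (\<Sum>i\<in>{1..d}. measure P (?S i))"
      using Sm by (intro measure_UNION_le) auto
    also have "(\<Sum>i\<in>{1..d}. measure P (?S i)) = (\<Sum>i\<in>{1..d}. 1 / real n)"
    proof (rule sum.cong)
      fix i assume i: "i \<in> {1..d}"
      have "measure P (?S i) = (real (a i) + 1) / n - real (a i) / n"
        using an[OF i] n i by (intro copula_slab[OF cop]) (auto simp: field_simps)
      then show "measure P (?S i) = 1 / real n" by (simp add: diff_divide_distrib[symmetric])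
    qed simp
    also have "\<dots> = real d / n" by simp
    finally show ?thesis unfolding cdf_on_def by simp
  qed
  finally show "cdf_on {1..d} P u \<le> cdf_on {1..d} P (\<lambda>i. real (a i) / n) + real d / n" .
qed


lemma PiE_UN_choice:
  "PiE I (\<lambda>i. \<Union>b\<in>R i. S i b) = (\<Union>c\<in>PiE I R. PiE I (\<lambda>i. S i (c i)))"
proof
  show "PiE I (\<lambda>i. \<Union>b\<in>R i. S i b) \<subseteq> (\<Union>c\<in>PiE I R. PiE I (\<lambda>i. S i (c i)))"
  proof
    fix x assume x: "x \<in> PiE I (\<lambda>i. \<Union>b\<in>R i. S i b)"
    define c where "c = restrict (\<lambda>i. SOME b. b \<in> R i \<and> x i \<in> S i b) I"
    have ex: "\<And>i. i \<in> I \<Longrightarrow> \<exists>b. b \<in> R i \<and> x i \<in> S i b" using x by (auto simp: PiE_def Pi_def)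
    have "c i \<in> R i \<and> x i \<in> S i (c i)" if "i \<in> I" for i
      using someI_ex[OF ex[OF that]] that unfolding c_def by simp
    then have "c \<in> PiE I R" "x \<in> PiE I (\<lambda>i. S i (c i))" using x unfolding c_def by (auto simp: PiE_def Pi_def)
    then show "x \<in> (\<Union>c\<in>PiE I R. PiE I (\<lambda>i. S i (c i)))" by blast
  qed
  show "(\<Union>c\<in>PiE I R. PiE I (\<lambda>i. S i (c i))) \<subseteq> PiE I (\<lambda>i. \<Union>b\<in>R i. S i b)"
    by (auto simp: PiE_def Pi_def)
qed

definition iv :: "nat \<Rightarrow> nat \<Rightarrow> real set" where
  "iv n b = {real b / n <.. (real b + 1) / n}"

lemma iv_disj:
  assumes "0 < n" "b \<noteq> b'" shows "iv n b \<inter> iv n b' = {}"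
proof (rule ccontr)
  assume "iv n b \<inter> iv n b' \<noteq> {}"
  then obtain x where "x \<in> iv n b" "x \<in> iv n b'" by blast
  then have "real b / n < x" "x \<le> (real b + 1) / n" "real b' / n < x" "x \<le> (real b' + 1) / n"
    unfolding iv_def by auto
  then have "real b < n * x" "n * x \<le> real b + 1" "real b' < n * x" "n * x \<le> real b' + 1"
    using assms(1) by (auto simp: field_simps)
  then have "real b < real b' + 1" "real b' < real b + 1" by linarith+
  then show False using assms(2) by linarith
qed

lemma iv_UN:
  assumes "0 < n" shows "(\<Union>b\<in>{..<a}. iv n b) = {0 <.. real a / n}"
proof (induction a)
  case 0 then show ?case by auto
next
  case (Suc a)
  have "(\<Union>b\<in>{..<Suc a}. iv n b) = {0 <.. real a / n} \<union> iv n a"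
    using Suc by (simp add: lessThan_Suc Un_commute)
  also have "\<dots> = {0 <.. real (Suc a) / n}"
  proof -
    have p: "0 \<le> real a / n" "real a / n \<le> (real a + 1) / n" using assms by (auto simp: divide_right_mono)
    have "{0<..real a / n} \<union> {real a / n<..(real a + 1) / n} = {0<..(real a+1)/n}" by (rule ivl_disj_un_two(6)[OF p])
    then show ?thesis unfolding iv_def by (simp add: add.commute)
  qed
  finally show ?case .
qed

lemma iv_sub:
  assumes "0 < n" "a < n" shows "iv n a \<subseteq> {0<..1}"
proof
  fix x assume "x \<in> iv n a"
  then have x: "real a / n < x" "x \<le> (real a + 1) / n" by (auto simp: iv_def)
  have z: "0 \<le> real a / n" by simp
  have "Suc a \<le> n" using assms by simp
  then have "real (Suc a) \<le> real n" by (simp only: of_nat_le_iff)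
  then have "real a + 1 \<le> real n" by simp
  then have o: "(real a + 1) / n \<le> 1" using assms(1) by (simp add: divide_le_eq)
  show "x \<in> {0<..1}" unfolding greaterThanAtMost_iff using x z o by (intro conjI; linarith)
qed

locale constr =
  fixes d n :: nat and \<mu> :: "(nat \<Rightarrow> real) measure"
  assumes d1: "1 \<le> d" and n0: "0 < n" and cop: "copula_on {1..d} \<mu>"
begin

interpretation P: prob_space \<mu> using copula_basic(1)[OF cop] .

lemma space_mu: "space \<mu> = PiE {1..d} (\<lambda>_. UNIV)" using copula_basic(3)[OF cop] .

lemma PiE_ev: "(\<And>i. i \<in> {1..d} \<Longrightarrow> A i \<in> sets borel) \<Longrightarrow> PiE {1..d} A \<in> sets \<mu>"
  by (rule copula_PiE_sets[OF cop]) auto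

definition cells where "cells = PiE {1..d} (\<lambda>_. {..<n})"
definition cell where "cell c = PiE {1..d} (\<lambda>i. iv n (c i))"
definition w where "w c = measure \<mu> (cell c)"

lemma finite_cells: "finite cells" unfolding cells_def by (simp add: finite_PiE)

lemma w_nonneg: "0 \<le> w c" unfolding w_def by simp

lemma cell_ev: "cell c \<in> sets \<mu>" unfolding cell_def iv_def by (rule PiE_ev) auto

lemma AE_supp: "AE x in \<mu>. \<forall>i\<in>{1..d}. 0 < x i \<and> x i \<le> 1"
proof (rule AE_finite_allI)
  show "finite {1..d}" by simp
  fix i assume i': "i \<in> {1..d}"
  have s0: "{x\<in>space \<mu>. x i \<le> 0} \<in> sets \<mu>" "{x\<in>space \<mu>. x i \<le> 1} \<in> sets \<mu>"
    using copula_slab_set(2)[OF cop _ i'] by auto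
  have m0: "measure \<mu> {x\<in>space \<mu>. x i \<le> 0} = 0" using copula_margin[OF cop i'] by simp
  have m1: "measure \<mu> (space \<mu> - {x\<in>space \<mu>. x i \<le> 1}) = 0"
    using P.prob_compl[OF s0(2)] copula_margin[OF cop i', of 1] by simp
  have "AE x in \<mu>. x \<notin> {x\<in>space \<mu>. x i \<le> 0}"
    using m0 s0 by (intro AE_not_in null_setsI) (auto simp: P.emeasure_eq_measure)
  moreover have "AE x in \<mu>. x \<notin> space \<mu> - {x\<in>space \<mu>. x i \<le> 1}"
    using m1 s0 by (intro AE_not_in null_setsI) (auto simp: P.emeasure_eq_measure)
  moreover have "AE x in \<mu>. x \<in> space \<mu>" by (simp add: AE_space)
  ultimately show "AE x in \<mu>. 0 < x i \<and> x i \<le> 1"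
    by eventually_elim (auto simp: not_le)
qed

lemma partition:
  assumes R: "\<And>i. i \<in> {1..d} \<Longrightarrow> R i \<subseteq> {..<n}"
  shows "measure \<mu> (PiE {1..d} (\<lambda>i. \<Union>b\<in>R i. iv n b)) = (\<Sum>c\<in>PiE {1..d} R. w c)"
proof -
  have fin: "finite (PiE {1..d} R)"
    using R by (intro finite_PiE) (auto intro: finite_subset)
  have "measure \<mu> (PiE {1..d} (\<lambda>i. \<Union>b\<in>R i. iv n b)) = measure \<mu> (\<Union>c\<in>PiE {1..d} R. cell c)"
    unfolding cell_def PiE_UN_choice ..
  also have "\<dots> = (\<Sum>c\<in>PiE {1..d} R. measure \<mu> (cell c))"
  proof (rule P.finite_measure_finite_Union[OF fin])
    show "cell ` PiE {1..d} R \<subseteq> P.events" using cell_ev by auto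
    show "disjoint_family_on cell (PiE {1..d} R)"
      unfolding disjoint_family_on_def
    proof (intro ballI impI)
      fix c c' assume c: "c \<in> PiE {1..d} R" and c': "c' \<in> PiE {1..d} R" and ne: "c \<noteq> c'"
      then obtain i where i: "i \<in> {1..d}" "c i \<noteq> c' i"
        using PiE_ext[OF c c'] ne by blast
      have "iv n (c i) \<inter> iv n (c' i) = {}" using iv_disj[OF n0 i(2)] .
      then show "cell c \<inter> cell c' = {}" unfolding cell_def using i(1) by (auto simp: PiE_def Pi_def)
    qed
  qed
  finally show ?thesis unfolding w_def .
qed

lemma box_AE:
  assumes "\<And>i. i \<in> {1..d} \<Longrightarrow> A i \<in> sets borel"
  shows "measure \<mu> (PiE {1..d} (\<lambda>i. A i \<inter> {0<..1})) = measure \<mu> (PiE {1..d} A)"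
proof (rule measure_eq_AE)
  show "AE x in \<mu>. (x \<in> PiE {1..d} (\<lambda>i. A i \<inter> {0<..1})) = (x \<in> PiE {1..d} A)"
    using AE_supp by eventually_elim (auto simp: PiE_def Pi_def)
  show "PiE {1..d} (\<lambda>i. A i \<inter> {0<..1}) \<in> sets \<mu>" by (rule PiE_ev) (use assms in auto)
  show "PiE {1..d} A \<in> sets \<mu>" by (rule PiE_ev) (use assms in auto)
qed

lemma sum_w_all: "(\<Sum>c\<in>cells. w c) = 1"
proof -
  have "(\<Sum>c\<in>cells. w c) = measure \<mu> (PiE {1..d} (\<lambda>i. \<Union>b\<in>{..<n}. iv n b))"
    unfolding cells_def by (rule partition[symmetric]) auto
  also have "\<dots> = measure \<mu> (PiE {1..d} (\<lambda>i. UNIV \<inter> {0<..1}))"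
    using iv_UN[OF n0, of n] n0 by simp
  also have "\<dots> = measure \<mu> (PiE {1..d} (\<lambda>i. UNIV))" by (rule box_AE) auto
  also have "\<dots> = 1" using space_mu P.prob_space by simp
  finally show ?thesis .
qed

lemma sum_w_slab:
  assumes i: "i \<in> {1..d}" and a: "a < n"
  shows "(\<Sum>c\<in>{c\<in>cells. c i = a}. w c) = 1 / n"
proof -
  let ?R = "\<lambda>k. if k = i then {a} else {..<n}"
  have eq: "{c\<in>cells. c i = a} = PiE {1..d} ?R"
    unfolding cells_def using i a by (auto simp: PiE_def Pi_def)
  have "(\<Sum>c\<in>{c\<in>cells. c i = a}. w c) = measure \<mu> (PiE {1..d} (\<lambda>k. \<Union>b\<in>?R k. iv n b))"
    unfolding eq using a by (intro partition[symmetric]) auto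
  also have "PiE {1..d} (\<lambda>k. \<Union>b\<in>?R k. iv n b)
      = PiE {1..d} (\<lambda>k. (if k = i then iv n a else UNIV) \<inter> {0<..1})"
  proof -
    have "iv n a \<subseteq> {0<..1}" using iv_sub[OF n0 a] .
    then show ?thesis using iv_UN[OF n0, of n] n0 by (intro PiE_cong) auto
  qed
  also have "measure \<mu> \<dots> = measure \<mu> (PiE {1..d} (\<lambda>k. if k = i then iv n a else UNIV))"
    by (rule box_AE) (auto simp: iv_def)
  also have "PiE {1..d} (\<lambda>k. if k = i then iv n a else UNIV)
     = {x\<in>space \<mu>. real a / n < x i \<and> x i \<le> (real a + 1) / n}"
    using i space_mu unfolding iv_def by (auto simp: PiE_def Pi_def)
  also have "measure \<mu> \<dots> = (real a + 1) / n - real a / n"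
    using a n0 i by (intro copula_slab[OF cop]) (auto simp: field_simps)
  also have "\<dots> = 1 / n" by (simp add: diff_divide_distrib[symmetric])
  finally show ?thesis .
qed

lemma grid_mu:
  assumes a: "\<And>i. i \<in> {1..d} \<Longrightarrow> a i \<le> n"
  shows "cdf_on {1..d} \<mu> (\<lambda>i. real (a i) / n) = (\<Sum>c\<in>{c\<in>cells. \<forall>i\<in>{1..d}. c i < a i}. w c)"
proof -
  have eq: "{c\<in>cells. \<forall>i\<in>{1..d}. c i < a i} = PiE {1..d} (\<lambda>i. {..<a i})"
    unfolding cells_def using a by (auto simp: PiE_def Pi_def less_le_trans)
  have "(\<Sum>c\<in>{c\<in>cells. \<forall>i\<in>{1..d}. c i < a i}. w c) = measure \<mu> (PiE {1..d} (\<lambda>i. \<Union>b\<in>{..<a i}. iv n b))"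
    unfolding eq using a by (intro partition[symmetric]) (auto simp: less_le_trans)
  also have "PiE {1..d} (\<lambda>i. \<Union>b\<in>{..<a i}. iv n b) = PiE {1..d} (\<lambda>i. {..real (a i) / n} \<inter> {0<..1})"
  proof (intro PiE_cong)
    fix i assume i: "i \<in> {1..d}"
    have "real (a i) / n \<le> 1" using a[OF i] n0 by (simp add: field_simps)
    then show "(\<Union>b\<in>{..<a i}. iv n b) = {..real (a i) / n} \<inter> {0<..1}"
      using iv_UN[OF n0, of "a i"] by auto
  qed
  also have "measure \<mu> \<dots> = measure \<mu> (PiE {1..d} (\<lambda>i. {..real (a i) / n}))"
    by (rule box_AE) auto
  also have "PiE {1..d} (\<lambda>i. {..real (a i) / n}) = {x\<in>space \<mu>. \<forall>i\<in>{1..d}. x i \<le> real (a i) / n}"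
    using space_mu by (auto simp: PiE_def Pi_def)
  finally show ?thesis unfolding cdf_on_def by simp
qed

end

lemma meas_Ioc_cut:
  fixes p q s :: real
  assumes "p \<le> q"
  shows "measure lborel ({p<..q} \<inter> {..s}) = max 0 (min q s - p)"
proof (cases "p \<le> min q s")
  case True
  have "{p<..q} \<inter> {..s} = {p<..min q s}" by auto
  then show ?thesis using True by simp
next
  case False
  then have "{p<..q} \<inter> {..s} = {}" by auto
  moreover have "min q s - p \<le> 0" using False assms by linarith
  ultimately show ?thesis by simp
qed

context constr
begin

definition e where "e = to_nat_on cells"
definition off where "off i c = real (c i) / n + (\<Sum>c'\<in>{c'\<in>cells. c' i = c i \<and> e c' < e c}. w c')"
definition Iv where "Iv c i = {off i c <.. off i c + w c}"
definition Bx where "Bx c = PiE {1..d} (Iv c)"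
definition dens where "dens x = (\<Sum>c\<in>cells. indicator (Bx c) x / w c ^ (d - 1))"
definition lam where "lam = PiM {1..d} (\<lambda>_. lborel :: real measure)"
definition nu where "nu = density lam (\<lambda>x. ennreal (dens x))"

lemma inj_e: "inj_on e cells"
  unfolding e_def using finite_cells by (intro inj_on_to_nat_on countable_finite)

lemma off_lower: "real (c i) / n \<le> off i c"
  unfolding off_def by (intro add_increasing2 sum_nonneg w_nonneg) auto

lemma off_upper:
  assumes c: "c \<in> cells" and i: "i \<in> {1..d}"
  shows "off i c + w c \<le> (real (c i) + 1) / n"
proof -
  let ?S = "{c'\<in>cells. c' i = c i \<and> e c' < e c}"
  let ?T = "{c'\<in>cells. c' i = c i}"
  have ci: "c i < n" using c i unfolding cells_def by (auto simp: PiE_def Pi_def)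
  have "w c + sum w ?S = sum w (insert c ?S)"
    using finite_cells by (subst sum.insert) auto
  also have "\<dots> \<le> sum w ?T"
    using finite_cells c by (intro sum_mono2 w_nonneg) auto
  also have "\<dots> = 1 / n" using sum_w_slab[OF i ci] .
  finally show ?thesis unfolding off_def by (simp add: add_divide_distrib)
qed

lemma Iv_sub:
  assumes c: "c \<in> cells" and i: "i \<in> {1..d}" shows "Iv c i \<subseteq> iv n (c i)"
proof
  fix x assume "x \<in> Iv c i"
  then have "off i c < x" "x \<le> off i c + w c" by (auto simp: Iv_def)
  with off_lower[of c i] off_upper[OF c i] have "real (c i) / n < x" "x \<le> (real (c i) + 1) / n"
    by linarith+
  then show "x \<in> iv n (c i)" by (simp add: iv_def)
qed

lemma cells_lt: "c \<in> cells \<Longrightarrow> i \<in> {1..d} \<Longrightarrow> c i < n"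
  unfolding cells_def by (auto simp: PiE_def Pi_def)

lemma Iv_sub01: "c \<in> cells \<Longrightarrow> i \<in> {1..d} \<Longrightarrow> Iv c i \<subseteq> {0<..1}"
  using Iv_sub iv_sub[OF n0 cells_lt] by blast

lemma Iv_disj:
  assumes c: "c \<in> cells" and c': "c' \<in> cells" and ne: "c \<noteq> c'" and i: "i \<in> {1..d}"
  shows "Iv c i \<inter> Iv c' i = {}"
proof (cases "c i = c' i")
  case False
  then show ?thesis using Iv_sub[OF c i] Iv_sub[OF c' i] iv_disj[OF n0 False] by blast
next
  case True
  have "e c \<noteq> e c'" using inj_e c c' ne by (auto dest: inj_onD)
  have key: "off i a + w a \<le> off i b" if a: "a \<in> cells" and b: "b \<in> cells" and ab: "a i = b i" "e a < e b" for a b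
  proof -
    let ?Sa = "{c'\<in>cells. c' i = a i \<and> e c' < e a}"
    let ?Sb = "{c'\<in>cells. c' i = b i \<and> e c' < e b}"
    have "w a + sum w ?Sa = sum w (insert a ?Sa)"
      using finite_cells by (subst sum.insert) auto
    also have "\<dots> \<le> sum w ?Sb"
      using finite_cells a ab by (intro sum_mono2 w_nonneg) auto
    finally show ?thesis unfolding off_def using ab by simp
  qed
  show ?thesis
  proof (cases "e c < e c'")
    case True
    then have "off i c + w c \<le> off i c'" using key[OF c c'] \<open>c i = c' i\<close> by simp
    then show ?thesis unfolding Iv_def by auto
  next
    case False
    then have "e c' < e c" using \<open>e c \<noteq> e c'\<close> by simp
    then have "off i c' + w c' \<le> off i c" using key[OF c' c] \<open>c i = c' i\<close> by simp
    then show ?thesis unfolding Iv_def by auto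
  qed
qed

lemma Iv_sets[measurable]: "Iv c i \<in> sets borel" unfolding Iv_def by simp

lemma meas_Iv: "measure lborel (Iv c i) = w c"
  unfolding Iv_def using w_nonneg[of c] by simp

lemma emeas_Iv_cut: "emeasure lborel (Iv c i \<inter> A) = ennreal (measure lborel (Iv c i \<inter> A))"
proof (rule emeasure_eq_ennreal_measure)
  have "emeasure lborel (Iv c i \<inter> A) \<le> emeasure lborel (Iv c i)"
    by (rule emeasure_mono) auto
  also have "\<dots> = ennreal (w c)" unfolding Iv_def using w_nonneg[of c] by simp
  finally show "emeasure lborel (Iv c i \<inter> A) \<noteq> top" by (auto simp: top_unique)
qed

lemma Iv_empty: "w c = 0 \<Longrightarrow> Iv c i = {}" unfolding Iv_def by simp

lemma sets_lam: "sets lam = sets (PiM {1..d} (\<lambda>_. borel))"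
  unfolding lam_def by (intro sets_PiM_cong) auto

lemma space_lam: "space lam = PiE {1..d} (\<lambda>_. UNIV)"
  unfolding lam_def by (simp add: space_PiM)

lemma Bx_sets[measurable]: "Bx c \<in> sets lam"
  unfolding Bx_def lam_def by (intro sets_PiM_I_finite) auto

lemma dens_nonneg: "0 \<le> dens x"
  unfolding dens_def by (intro sum_nonneg divide_nonneg_nonneg zero_le_power w_nonneg) auto

lemma dens_meas[measurable]: "dens \<in> borel_measurable lam"
  unfolding dens_def by measurable

lemma sets_nu: "sets nu = sets (PiM {1..d} (\<lambda>_. borel))"
  unfolding nu_def using sets_lam by simp

lemma space_nu: "space nu = PiE {1..d} (\<lambda>_. UNIV)"
  unfolding nu_def using space_lam by simp

lemma box_nu:
  assumes A: "\<And>i. i \<in> {1..d} \<Longrightarrow> A i \<in> sets borel"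
  shows "emeasure nu (PiE {1..d} A) =
    ennreal (\<Sum>c\<in>cells. (\<Prod>i\<in>{1..d}. measure lborel (Iv c i \<inter> A i)) / w c ^ (d - 1))"
proof -
  interpret L: product_sigma_finite "\<lambda>_::nat. lborel :: real measure" by standard
  let ?S = "PiE {1..d} A"
  have S: "?S \<in> sets lam" unfolding lam_def using A by (intro sets_PiM_I_finite) auto
  have BS: "Bx c \<inter> ?S = PiE {1..d} (\<lambda>i. Iv c i \<inter> A i)" for c
    unfolding Bx_def by (auto simp: PiE_def Pi_def)
  have BSm: "Bx c \<inter> ?S \<in> sets lam" for c using S by simp
  have "emeasure nu ?S = (\<integral>\<^sup>+x. ennreal (dens x) * indicator ?S x \<partial>lam)"
    unfolding nu_def using S by (intro emeasure_density) auto
  also have "\<dots> = (\<integral>\<^sup>+x. (\<Sum>c\<in>cells. ennreal (1 / w c ^ (d - 1)) * indicator (Bx c \<inter> ?S) x) \<partial>lam)"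
  proof (rule nn_integral_cong)
    fix x
    have "ennreal (dens x) * indicator ?S x = ennreal (dens x * indicator ?S x)"
      using dens_nonneg by (simp add: ennreal_mult' ennreal_indicator[symmetric])
    also have "dens x * indicator ?S x = (\<Sum>c\<in>cells. (1 / w c ^ (d - 1)) * indicator (Bx c \<inter> ?S) x)"
      unfolding dens_def sum_distrib_right by (intro sum.cong) (auto simp: indicator_def)
    also have "ennreal \<dots> = (\<Sum>c\<in>cells. ennreal ((1 / w c ^ (d - 1)) * indicator (Bx c \<inter> ?S) x))"
      by (rule sum_ennreal[symmetric]) (auto intro!: divide_nonneg_nonneg zero_le_power w_nonneg)
    also have "\<dots> = (\<Sum>c\<in>cells. ennreal (1 / w c ^ (d - 1)) * indicator (Bx c \<inter> ?S) x)"
      by (intro sum.cong) (auto simp: indicator_def)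
    finally show "ennreal (dens x) * indicator ?S x = (\<Sum>c\<in>cells. ennreal (1 / w c ^ (d - 1)) * indicator (Bx c \<inter> ?S) x)" .
  qed
  also have "\<dots> = (\<Sum>c\<in>cells. ennreal (1 / w c ^ (d - 1)) * emeasure lam (Bx c \<inter> ?S))"
    using BSm by (subst nn_integral_sum) (auto simp: nn_integral_cmult_indicator)
  also have "\<dots> = (\<Sum>c\<in>cells. ennreal ((\<Prod>i\<in>{1..d}. measure lborel (Iv c i \<inter> A i)) / w c ^ (d - 1)))"
  proof (rule sum.cong)
    fix c assume c: "c \<in> cells"
    have "emeasure lam (Bx c \<inter> ?S) = (\<Prod>i\<in>{1..d}. emeasure lborel (Iv c i \<inter> A i))"
      unfolding BS lam_def using A by (intro L.emeasure_PiM) auto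
    also have "\<dots> = (\<Prod>i\<in>{1..d}. ennreal (measure lborel (Iv c i \<inter> A i)))"
      by (intro prod.cong refl emeas_Iv_cut)
    also have "\<dots> = ennreal (\<Prod>i\<in>{1..d}. measure lborel (Iv c i \<inter> A i))"
      by (rule prod_ennreal) simp
    finally show "ennreal (1 / w c ^ (d - 1)) * emeasure lam (Bx c \<inter> ?S)
        = ennreal ((\<Prod>i\<in>{1..d}. measure lborel (Iv c i \<inter> A i)) / w c ^ (d - 1))"
      by (simp add: ennreal_mult'[symmetric] w_nonneg prod_nonneg)
  qed simp
  also have "\<dots> = ennreal (\<Sum>c\<in>cells. (\<Prod>i\<in>{1..d}. measure lborel (Iv c i \<inter> A i)) / w c ^ (d - 1))"
    by (rule sum_ennreal) (auto intro!: divide_nonneg_nonneg prod_nonneg zero_le_power w_nonneg)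
  finally show ?thesis .
qed

end

lemma pow_div_pred:
  fixes x :: real assumes "1 \<le> d" shows "x ^ d / x ^ (d - 1) = x"
proof (cases "x = 0")
  case True then show ?thesis using assms by simp
next
  case False
  have "d = Suc (d - 1)" using assms by simp
  then have "x ^ d = x * x ^ (d - 1)" by (metis power_Suc)
  then show ?thesis using False by simp
qed

context constr
begin

lemma prod_const_but:
  assumes i: "i \<in> {1..d}"
  shows "(\<Prod>k\<in>{1..d}. if k = i then a else b) = a * b ^ (d - 1)"
proof -
  have "(\<Prod>k\<in>{1..d}. if k = i then a else b) = (if i = i then a else b) * (\<Prod>k\<in>{1..d} - {i}. if k = i then a else b)"
    using i by (intro prod.remove) auto
  also have "(\<Prod>k\<in>{1..d} - {i}. if k = i then a else b) = (\<Prod>k\<in>{1..d} - {i}. b)"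
    by (intro prod.cong) auto
  also have "\<dots> = b ^ (d - 1)" using i by simp
  finally show ?thesis by simp
qed

lemma total_nu: "emeasure nu (space nu) = 1"
proof -
  have "emeasure nu (space nu) = emeasure nu (PiE {1..d} (\<lambda>_. UNIV))" using space_nu by simp
  also have "\<dots> = ennreal (\<Sum>c\<in>cells. (\<Prod>i\<in>{1..d}. measure lborel (Iv c i \<inter> UNIV)) / w c ^ (d - 1))"
    by (rule box_nu) auto
  also have "(\<Sum>c\<in>cells. (\<Prod>i\<in>{1..d}. measure lborel (Iv c i \<inter> UNIV)) / w c ^ (d - 1)) = (\<Sum>c\<in>cells. w c)"
  proof (rule sum.cong)
    fix c
    have "(\<Prod>i\<in>{1..d}. measure lborel (Iv c i \<inter> UNIV)) = w c ^ d" using meas_Iv by simp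
    then show "(\<Prod>i\<in>{1..d}. measure lborel (Iv c i \<inter> UNIV)) / w c ^ (d - 1) = w c"
      using pow_div_pred[OF d1] by simp
  qed simp
  finally show ?thesis using sum_w_all by simp
qed

lemma margin_sum:
  assumes i: "i \<in> {1..d}" and s: "0 \<le> s" "s \<le> 1"
  shows "(\<Sum>c\<in>cells. measure lborel (Iv c i \<inter> {..s})) = s"
proof -
  let ?E = "emeasure lborel"
  let ?U = "\<Union>c\<in>cells. Iv c i"
  have disj: "disjoint_family_on (\<lambda>c. Iv c i \<inter> X) cells" for X
    unfolding disjoint_family_on_def using Iv_disj[OF _ _ _ i] by blast
  have sumE: "(\<Sum>c\<in>cells. ?E (Iv c i \<inter> X)) = ?E (?U \<inter> X)" if X: "X \<in> sets borel" for X
  proof -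
    have "(\<Sum>c\<in>cells. ?E (Iv c i \<inter> X)) = ?E (\<Union>c\<in>cells. Iv c i \<inter> X)"
      using X disj[of X] finite_cells by (intro sum_emeasure) auto
    also have "(\<Union>c\<in>cells. Iv c i \<inter> X) = ?U \<inter> X" by blast
    finally show ?thesis .
  qed
  have U01: "?U \<subseteq> {0<..1}" using Iv_sub01[OF _ i] by blast
  have sumR: "(\<Sum>c\<in>cells. ?E (Iv c i \<inter> X)) = ennreal (\<Sum>c\<in>cells. measure lborel (Iv c i \<inter> X))" for X
    by (simp add: emeas_Iv_cut)
  define a where "a = (\<Sum>c\<in>cells. measure lborel (Iv c i \<inter> {..s}))"
  define b where "b = (\<Sum>c\<in>cells. measure lborel (Iv c i \<inter> {s<..}))"
  have a0: "0 \<le> a" "0 \<le> b" unfolding a_def b_def by (auto intro: sum_nonneg)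
  have "ennreal a = ?E (?U \<inter> {..s})" unfolding a_def using sumE[of "{..s}"] sumR[of "{..s}"] by simp
  also have "\<dots> \<le> ?E {0<..s}" using U01 by (intro emeasure_mono) auto
  also have "\<dots> = ennreal s" using s by simp
  finally have as: "a \<le> s" using s by simp
  have "ennreal b = ?E (?U \<inter> {s<..})" unfolding b_def using sumE[of "{s<..}"] sumR[of "{s<..}"] by simp
  also have "\<dots> \<le> ?E {s<..1}" using U01 by (intro emeasure_mono) auto
  also have "\<dots> = ennreal (1 - s)" using s by simp
  finally have bs: "b \<le> 1 - s" using s by simp
  have "a + b = (\<Sum>c\<in>cells. measure lborel (Iv c i \<inter> {..s}) + measure lborel (Iv c i \<inter> {s<..}))"
    unfolding a_def b_def by (simp add: sum.distrib)
  also have "\<dots> = (\<Sum>c\<in>cells. w c)"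
  proof (rule sum.cong)
    fix c
    have "ennreal (measure lborel (Iv c i \<inter> {..s}) + measure lborel (Iv c i \<inter> {s<..}))
        = ?E (Iv c i \<inter> {..s}) + ?E (Iv c i \<inter> {s<..})"
      by (simp add: emeas_Iv_cut)
    also have "\<dots> = ?E ((Iv c i \<inter> {..s}) \<union> (Iv c i \<inter> {s<..}))"
      by (rule plus_emeasure) auto
    also have "(Iv c i \<inter> {..s}) \<union> (Iv c i \<inter> {s<..}) = Iv c i" by auto
    also have "?E (Iv c i) = ennreal (w c)" using emeas_Iv_cut[of c i UNIV] meas_Iv by simp
    finally show "measure lborel (Iv c i \<inter> {..s}) + measure lborel (Iv c i \<inter> {s<..}) = w c"
      by (subst (asm) ennreal_inj) (auto simp: w_nonneg)
  qed simp
  also have "\<dots> = 1" using sum_w_all .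
  finally have "a + b = 1" .
  then show ?thesis using as bs unfolding a_def by linarith
qed

lemma margin_nu:
  assumes i: "i \<in> {1..d}" and s: "0 \<le> s" "s \<le> 1"
  shows "measure nu {x\<in>space nu. x i \<le> s} = s"
proof -
  have eq: "{x\<in>space nu. x i \<le> s} = PiE {1..d} (\<lambda>k. if k = i then {..s} else UNIV)"
    using space_nu i by (auto simp: PiE_def Pi_def)
  have "emeasure nu {x\<in>space nu. x i \<le> s} =
     ennreal (\<Sum>c\<in>cells. (\<Prod>k\<in>{1..d}. measure lborel (Iv c k \<inter> (if k = i then {..s} else UNIV))) / w c ^ (d - 1))"
    unfolding eq by (rule box_nu) auto
  also have "(\<Sum>c\<in>cells. (\<Prod>k\<in>{1..d}. measure lborel (Iv c k \<inter> (if k = i then {..s} else UNIV))) / w c ^ (d - 1))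
      = (\<Sum>c\<in>cells. measure lborel (Iv c i \<inter> {..s}))"
  proof (rule sum.cong)
    fix c
    have "(\<Prod>k\<in>{1..d}. measure lborel (Iv c k \<inter> (if k = i then {..s} else UNIV)))
        = (\<Prod>k\<in>{1..d}. if k = i then measure lborel (Iv c i \<inter> {..s}) else w c)"
      by (intro prod.cong) (auto simp: meas_Iv)
    also have "\<dots> = measure lborel (Iv c i \<inter> {..s}) * w c ^ (d - 1)" by (rule prod_const_but[OF i])
    finally have p: "(\<Prod>k\<in>{1..d}. measure lborel (Iv c k \<inter> (if k = i then {..s} else UNIV)))
        = measure lborel (Iv c i \<inter> {..s}) * w c ^ (d - 1)" .
    show "(\<Prod>k\<in>{1..d}. measure lborel (Iv c k \<inter> (if k = i then {..s} else UNIV))) / w c ^ (d - 1)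
        = measure lborel (Iv c i \<inter> {..s})"
    proof (cases "w c = 0")
      case True then show ?thesis using Iv_empty[OF True] d1 by simp
    next
      case False then show ?thesis unfolding p by simp
    qed
  qed simp
  also have "\<dots> = s" by (rule margin_sum[OF i s])
  finally show ?thesis using s by (intro measure_eq_emeasure_eq_ennreal) auto
qed

lemma copula_nu: "copula_on {1..d} nu"
  unfolding copula_on_def
proof (intro conjI ballI)
  show "prob_space nu" using total_nu by (intro prob_spaceI)
  show "sets nu = sets (PiM {1..d} (\<lambda>_. borel))" by (rule sets_nu)
  fix i s assume "i \<in> {1..d}" "s \<in> {0..1::real}"
  then show "measure nu {x\<in>space nu. x i \<le> s} = s" using margin_nu by auto
qed

lemma grid_nu:
  assumes a: "\<And>i. i \<in> {1..d} \<Longrightarrow> a i \<le> n"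
  shows "cdf_on {1..d} nu (\<lambda>i. real (a i) / n) = (\<Sum>c\<in>{c\<in>cells. \<forall>i\<in>{1..d}. c i < a i}. w c)"
proof -
  have eq: "{x\<in>space nu. \<forall>i\<in>{1..d}. x i \<le> real (a i) / n} = PiE {1..d} (\<lambda>i. {..real (a i) / n})"
    using space_nu by (auto simp: PiE_def Pi_def)
  have "emeasure nu {x\<in>space nu. \<forall>i\<in>{1..d}. x i \<le> real (a i) / n} =
     ennreal (\<Sum>c\<in>cells. (\<Prod>i\<in>{1..d}. measure lborel (Iv c i \<inter> {..real (a i) / n})) / w c ^ (d - 1))"
    unfolding eq by (rule box_nu) auto
  also have "(\<Sum>c\<in>cells. (\<Prod>i\<in>{1..d}. measure lborel (Iv c i \<inter> {..real (a i) / n})) / w c ^ (d - 1))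
     = (\<Sum>c\<in>cells. if \<forall>i\<in>{1..d}. c i < a i then w c else 0)"
  proof (rule sum.cong)
    fix c assume c: "c \<in> cells"
    show "(\<Prod>i\<in>{1..d}. measure lborel (Iv c i \<inter> {..real (a i) / n})) / w c ^ (d - 1)
       = (if \<forall>i\<in>{1..d}. c i < a i then w c else 0)"
    proof (cases "\<forall>i\<in>{1..d}. c i < a i")
      case True
      have "(\<Prod>i\<in>{1..d}. measure lborel (Iv c i \<inter> {..real (a i) / n})) = (\<Prod>i\<in>{1..d}. w c)"
      proof (rule prod.cong)
        fix i assume i: "i \<in> {1..d}"
        have "Suc (c i) \<le> a i" using True i by (simp add: Suc_le_eq)
        then have "real (Suc (c i)) \<le> real (a i)" by (simp only: of_nat_le_iff)
        then have "(real (c i) + 1) / n \<le> real (a i) / n" using n0 by (simp add: divide_right_mono)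
        then have "Iv c i \<subseteq> {..real (a i) / n}" using Iv_sub[OF c i] unfolding iv_def by auto
        then have "Iv c i \<inter> {..real (a i) / n} = Iv c i" by blast
        then show "measure lborel (Iv c i \<inter> {..real (a i) / n}) = w c" using meas_Iv by simp
      qed simp
      then show ?thesis using True pow_div_pred[OF d1] by simp
    next
      case False
      then obtain i where i: "i \<in> {1..d}" "a i \<le> c i" by auto
      then have "real (a i) / n \<le> real (c i) / n" using n0 by (simp add: divide_right_mono)
      then have e0: "Iv c i \<inter> {..real (a i) / n} = {}" using Iv_sub[OF c i(1)] unfolding iv_def by auto
      have p0: "(\<Prod>i\<in>{1..d}. measure lborel (Iv c i \<inter> {..real (a i) / n})) = 0"
        by (intro prod_zero bexI[of _ i]) (use e0 i(1) in auto)
      show ?thesis unfolding p0 by (subst if_not_P[OF False]) simp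
    qed
  qed simp
  also have "\<dots> = (\<Sum>c\<in>{c\<in>cells. \<forall>i\<in>{1..d}. c i < a i}. w c)"
    using finite_cells by (simp add: sum.inter_filter)
  finally show ?thesis unfolding cdf_on_def
    by (intro measure_eq_emeasure_eq_ennreal) (auto intro: sum_nonneg w_nonneg)
qed

lemma dist_nu: "copula_dist d \<mu> nu \<le> real d / n"
  unfolding copula_dist_def
proof (rule cSUP_least)
  show "cube {1..d} \<noteq> {}" unfolding cube_def by (auto intro!: exI[of _ "\<lambda>_. 0"])
  fix u assume u: "u \<in> cube {1..d}"
  define a where "a = (\<lambda>i. min (n-1) (nat \<lfloor>real n * u i\<rfloor>))"
  have an: "a i \<le> n" for i unfolding a_def by simp
  have eq: "cdf_on {1..d} \<mu> (\<lambda>i. real (a i) / n) = cdf_on {1..d} nu (\<lambda>i. real (a i) / n)"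
    using grid_mu[of a] grid_nu[of a] an by simp
  have m1: "cdf_on {1..d} \<mu> (\<lambda>i. real (a i) / n) \<le> cdf_on {1..d} \<mu> u"
    "cdf_on {1..d} \<mu> u \<le> cdf_on {1..d} \<mu> (\<lambda>i. real (a i) / n) + real d / n"
    using grid_bound[OF cop n0 u] unfolding a_def by auto
  have m2: "cdf_on {1..d} nu (\<lambda>i. real (a i) / n) \<le> cdf_on {1..d} nu u"
    "cdf_on {1..d} nu u \<le> cdf_on {1..d} nu (\<lambda>i. real (a i) / n) + real d / n"
    using grid_bound[OF copula_nu n0 u] unfolding a_def by auto
  show "\<bar>cdf_on {1..d} \<mu> u - cdf_on {1..d} nu u\<bar> \<le> real d / n"
    using m1 m2 eq by linarith
qed

end

context constr
begin

definition Qs where "Qs A = (\<Sum>c\<in>cells. (\<Prod>i\<in>{1..d}. measure lborel (Iv c i \<inter> A i)) / w c ^ (d - 1))"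

lemma Qs_nonneg: "0 \<le> Qs A"
  unfolding Qs_def by (intro sum_nonneg divide_nonneg_nonneg prod_nonneg zero_le_power w_nonneg) auto

lemma box_nu': "(\<And>i. i \<in> {1..d} \<Longrightarrow> A i \<in> sets borel) \<Longrightarrow> emeasure nu (PiE {1..d} A) = ennreal (Qs A)"
  unfolding Qs_def by (rule box_nu)

lemma Qs_single:
  assumes c0: "c0 \<in> cells" and l0: "l0 \<in> {1..d}" and sub: "A l0 \<subseteq> Iv c0 l0"
  shows "Qs A = (\<Prod>i\<in>{1..d}. measure lborel (Iv c0 i \<inter> A i)) / w c0 ^ (d - 1)"
proof -
  have "Qs A = (\<Prod>i\<in>{1..d}. measure lborel (Iv c0 i \<inter> A i)) / w c0 ^ (d - 1) +
     (\<Sum>c\<in>cells - {c0}. (\<Prod>i\<in>{1..d}. measure lborel (Iv c i \<inter> A i)) / w c ^ (d - 1))"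
    unfolding Qs_def using c0 finite_cells by (subst sum.remove) auto
  also have "(\<Sum>c\<in>cells - {c0}. (\<Prod>i\<in>{1..d}. measure lborel (Iv c i \<inter> A i)) / w c ^ (d - 1)) = 0"
  proof (rule sum.neutral, rule ballI)
    fix c assume c: "c \<in> cells - {c0}"
    have "Iv c l0 \<inter> A l0 = {}" using Iv_disj[of c c0 l0] c c0 l0 sub by auto
    then have "(\<Prod>i\<in>{1..d}. measure lborel (Iv c i \<inter> A i)) = 0"
      by (intro prod_zero bexI[of _ l0]) (use l0 in auto)
    then show "(\<Prod>i\<in>{1..d}. measure lborel (Iv c i \<inter> A i)) / w c ^ (d - 1) = 0" by simp
  qed
  finally show ?thesis by simp
qed

lemma meas_nu_restrict: "(\<lambda>x. restrict x S) \<in> measurable nu (PiM S (\<lambda>_. borel))" if "S \<subseteq> {1..d}" for S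
proof -
  have "(\<lambda>x. restrict x S) \<in> measurable (PiM {1..d} (\<lambda>_. borel)) (PiM S (\<lambda>_. borel :: real measure))"
    using that by (rule measurable_restrict_subset)
  then show ?thesis using sets_nu by (simp cong: measurable_cong_sets)
qed

lemma marg_props:
  assumes S: "S \<subseteq> {1..d}"
  shows "prob_space (marg S nu)" "sets (marg S nu) = sets (PiM S (\<lambda>_. borel))"
    "space (marg S nu) = PiE S (\<lambda>_. UNIV)"
proof -
  interpret N: prob_space nu using copula_basic(1)[OF copula_nu] .
  show "prob_space (marg S nu)" unfolding marg_def by (rule N.prob_space_distr[OF meas_nu_restrict[OF S]])
  show "sets (marg S nu) = sets (PiM S (\<lambda>_. borel))" unfolding marg_def by simp
  show "space (marg S nu) = PiE S (\<lambda>_. UNIV)" unfolding marg_def by (simp add: space_PiM)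
qed

lemma marg_box:
  assumes S: "S \<subseteq> {1..d}" and A: "\<And>i. i \<in> S \<Longrightarrow> A i \<in> sets borel"
  shows "emeasure (marg S nu) (PiE S A) = ennreal (Qs (\<lambda>i. if i \<in> S then A i else UNIV))"
proof -
  have m: "PiE S A \<in> sets (PiM S (\<lambda>_. borel))" using A finite_subset[OF S] by (intro sets_PiM_I_finite) auto
  have "emeasure (marg S nu) (PiE S A) = emeasure nu ((\<lambda>x. restrict x S) -` PiE S A \<inter> space nu)"
    unfolding marg_def by (rule emeasure_distr[OF meas_nu_restrict[OF S] m])
  also have "(\<lambda>x. restrict x S) -` PiE S A \<inter> space nu = PiE {1..d} (\<lambda>i. if i \<in> S then A i else UNIV)"
    using S space_nu by (auto simp: PiE_def Pi_def)
  also have "emeasure nu \<dots> = ennreal (Qs (\<lambda>i. if i \<in> S then A i else UNIV))"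
    using A by (intro box_nu') auto
  finally show ?thesis .
qed

lemma marg_marg:
  assumes "L \<subseteq> J" "J \<subseteq> {1..d}"
  shows "marg L (marg J nu) = marg L nu"
proof -
  have "marg L (marg J nu) = distr nu (PiM L (\<lambda>_. borel)) ((\<lambda>x. restrict x L) \<circ> (\<lambda>x. restrict x J))"
    unfolding marg_def
    by (rule distr_distr[OF measurable_restrict_subset[OF assms(1)] meas_nu_restrict[OF assms(2)]])
  also have "\<dots> = marg L nu" unfolding marg_def
    using assms(1) by (intro distr_cong) (auto simp: fun_eq_iff restrict_def)
  finally show ?thesis .
qed

definition Gc where "Gc c j s = measure lborel (Iv c j \<inter> {..s}) / w c"
definition BL where "BL L c = PiE L (Iv c)"
definition F0 where "F0 L j s t = (\<Sum>c\<in>cells. indicator (BL L c) t * Gc c j s)"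

lemma Gc_nonneg: "0 \<le> Gc c j s" unfolding Gc_def using w_nonneg[of c] by simp

lemma F0_nonneg: "0 \<le> F0 L j s t" unfolding F0_def by (intro sum_nonneg mult_nonneg_nonneg Gc_nonneg) auto

lemma BL_disj:
  assumes "L \<subseteq> {1..d}" "L \<noteq> {}" "c \<in> cells" "c' \<in> cells" "c \<noteq> c'"
  shows "BL L c \<inter> BL L c' = {}"
proof -
  obtain l where l: "l \<in> L" using assms(2) by auto
  then have "l \<in> {1..d}" using assms(1) by auto
  then have "Iv c l \<inter> Iv c' l = {}" by (rule Iv_disj[OF assms(3,4,5)])
  then show ?thesis unfolding BL_def using l by (auto simp: PiE_def Pi_def)
qed

lemma F0_in:
  assumes "L \<subseteq> {1..d}" "L \<noteq> {}" "c \<in> cells" "t \<in> BL L c"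
  shows "F0 L j s t = Gc c j s"
proof -
  have "F0 L j s t = indicator (BL L c) t * Gc c j s + (\<Sum>c'\<in>cells - {c}. indicator (BL L c') t * Gc c' j s)"
    unfolding F0_def using assms(3) finite_cells by (subst sum.remove) auto
  also have "(\<Sum>c'\<in>cells - {c}. indicator (BL L c') t * Gc c' j s) = 0"
    using BL_disj[OF assms(1,2,3)] assms(4) by (intro sum.neutral) (auto simp: indicator_def)
  finally show ?thesis using assms(4) by simp
qed

lemma F0_out:
  assumes "\<And>c. c \<in> cells \<Longrightarrow> t \<notin> BL L c"
  shows "F0 L j s t = 0"
  unfolding F0_def using assms by (intro sum.neutral) auto

lemma BL_sets: "L \<subseteq> {1..d} \<Longrightarrow> BL L c \<in> sets (PiM L (\<lambda>_. borel))"
  unfolding BL_def by (intro sets_PiM_I_finite) (auto intro: finite_subset)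

end


lemma prod_at:
  assumes "finite D" "j \<in> D"
  shows "(\<Prod>i\<in>D. if i = j then x else g i) = x * (\<Prod>i\<in>D - {j}. g i)"
proof -
  have "(\<Prod>i\<in>D. if i = j then x else g i) = (if j = j then x else g j) * (\<Prod>i\<in>D - {j}. if i = j then x else g i)"
    using assms by (intro prod.remove)
  also have "(\<Prod>i\<in>D - {j}. if i = j then x else g i) = (\<Prod>i\<in>D - {j}. g i)" by (intro prod.cong) auto
  finally show ?thesis by simp
qed

locale sctx = constr +
  fixes J L :: "nat set" and K :: "(nat \<Rightarrow> real) \<Rightarrow> (nat \<Rightarrow> real) measure"
  assumes J: "J \<subseteq> {1..d}" and LJ: "L \<subseteq> J" and Lne: "L \<noteq> {}" and Mne: "J - L \<noteq> {}"
    and rcd: "is_rcd L (J - L) (marg J nu) K"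
begin

lemma LD: "L \<subseteq> {1..d}" using J LJ by auto
lemma finL: "finite L" using LD finite_subset by blast
lemma finJ: "finite J" using J finite_subset by blast
lemma LM: "L \<union> (J - L) = J" using LJ by auto

lemma Kmeas: "K \<in> measurable (PiM L (\<lambda>_. borel)) (prob_algebra (PiM (J - L) (\<lambda>_. borel)))"
  using rcd unfolding is_rcd_def by auto

abbreviation "nuL \<equiv> marg L nu"

lemma bindeq: "marg J nu = bind nuL (\<lambda>t. distr (K t) (PiM J (\<lambda>_. borel)) (\<lambda>y. merge L (J - L) (t, y)))"
  using rcd unfolding is_rcd_def marg_marg[OF LJ J] LM by simp

lemma nuL: "prob_space nuL" "sets nuL = sets (PiM L (\<lambda>_. borel))" "space nuL = PiE L (\<lambda>_. UNIV)"
  using marg_props[OF LD] by auto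

lemma Kt: assumes "t \<in> space nuL"
  shows "prob_space (K t)" "sets (K t) = sets (PiM (J - L) (\<lambda>_. borel))" "space (K t) = PiE (J - L) (\<lambda>_. UNIV)"
proof -
  have "t \<in> space (PiM L (\<lambda>_. borel :: real measure))" using assms nuL(3) by (simp add: space_PiM)
  then have "K t \<in> space (prob_algebra (PiM (J - L) (\<lambda>_. borel)))" by (rule measurable_space[OF Kmeas])
  then show "prob_space (K t)" "sets (K t) = sets (PiM (J - L) (\<lambda>_. borel))"
    by (auto simp: space_prob_algebra)
  then have "space (K t) = space (PiM (J - L) (\<lambda>_. borel :: real measure))" by (intro sets_eq_imp_space_eq) simp
  then show "space (K t) = PiE (J - L) (\<lambda>_. UNIV)" by (simp add: space_PiM)
qed

lemma Kmeas': "K \<in> measurable nuL (subprob_algebra (PiM (J - L) (\<lambda>_. borel)))"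
  using measurable_prob_algebraD[OF Kmeas] nuL(2) by (simp cong: measurable_cong_sets)

lemma kernel_meas:
  "(\<lambda>t. distr (K t) (PiM J (\<lambda>_. borel)) (\<lambda>y. merge L (J - L) (t, y))) \<in> measurable nuL (subprob_algebra (PiM J (\<lambda>_. borel)))"
proof (rule measurable_distr2[OF _ Kmeas'])
  have "merge L (J - L) \<in> measurable (PiM L (\<lambda>_. borel :: real measure) \<Otimes>\<^sub>M PiM (J - L) (\<lambda>_. borel :: real measure)) (PiM (L \<union> (J - L)) (\<lambda>_. borel :: real measure))"
    by (rule measurable_merge)
  moreover have S: "sets (nuL \<Otimes>\<^sub>M PiM (J - L) (\<lambda>_. borel :: real measure)) = sets (PiM L (\<lambda>_. borel :: real measure) \<Otimes>\<^sub>M PiM (J - L) (\<lambda>_. borel :: real measure))"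
    by (rule sets_pair_measure_cong) (simp_all only: nuL(2))
  have "measurable (nuL \<Otimes>\<^sub>M PiM (J - L) (\<lambda>_. borel)) (PiM J (\<lambda>_. borel :: real measure)) =
     measurable (PiM L (\<lambda>_. borel :: real measure) \<Otimes>\<^sub>M PiM (J - L) (\<lambda>_. borel :: real measure)) (PiM J (\<lambda>_. borel :: real measure))"
    by (intro measurable_cong_sets S refl)
  ultimately have "merge L (J - L) \<in> measurable (nuL \<Otimes>\<^sub>M PiM (J - L) (\<lambda>_. borel)) (PiM J (\<lambda>_. borel :: real measure))"
    unfolding LM by (simp only:)
  moreover have "(\<lambda>(t, y). merge L (J - L) (t, y)) = merge L (J - L)" by (simp add: fun_eq_iff)
  ultimately show "(\<lambda>(t, y). merge L (J - L) (t, y)) \<in> measurable (nuL \<Otimes>\<^sub>M PiM (J - L) (\<lambda>_. borel)) (PiM J (\<lambda>_. borel))"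
    by metis
qed

lemma merge_meas:
  assumes t: "t \<in> space nuL"
  shows "(\<lambda>y. merge L (J - L) (t, y)) \<in> measurable (K t) (PiM J (\<lambda>_. borel))"
proof -
  have t': "t \<in> space (PiM L (\<lambda>_. borel :: real measure))" using t nuL(3) by (simp add: space_PiM)
  have "merge L (J - L) \<in> measurable (PiM L (\<lambda>_. borel :: real measure) \<Otimes>\<^sub>M PiM (J - L) (\<lambda>_. borel :: real measure)) (PiM J (\<lambda>_. borel :: real measure))"
    using measurable_merge[of L "J - L" "\<lambda>_. borel :: real measure"] unfolding LM .
  then have "(\<lambda>y. merge L (J - L) (t, y)) \<in> measurable (PiM (J - L) (\<lambda>_. borel)) (PiM J (\<lambda>_. borel :: real measure))"
    by (rule measurable_Pair2[OF _ t'])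
  then show ?thesis using Kt(2)[OF t] by (simp cong: measurable_cong_sets)
qed

definition XA where "XA j s A = {x\<in>space (PiM J (\<lambda>_. borel :: real measure)). restrict x L \<in> PiE L A \<and> x j \<le> s}"

lemma XA_eq:
  assumes j: "j \<in> J - L"
  shows "XA j s A = PiE J (\<lambda>i. if i \<in> L then A i else if i = j then {..s} else UNIV)"
  unfolding XA_def space_PiM using j LJ by (auto simp: PiE_def Pi_def restrict_def extensional_def split: if_splits)

lemma XA_sets:
  assumes j: "j \<in> J - L" and A: "\<And>i. i \<in> L \<Longrightarrow> A i \<in> sets borel"
  shows "XA j s A \<in> sets (PiM J (\<lambda>_. borel))"
  unfolding XA_eq[OF j] using A finJ by (intro sets_PiM_I_finite) auto

lemma from_bind:
  assumes j: "j \<in> J - L" and A: "\<And>i. i \<in> L \<Longrightarrow> A i \<in> sets borel"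
  shows "emeasure (marg J nu) (XA j s A) =
     (\<integral>\<^sup>+t. emeasure (K t) {y\<in>space (K t). y j \<le> s} * indicator (PiE L A) t \<partial>nuL)"
proof -
  have ne: "space nuL \<noteq> {}" using nuL(3) by (simp add: PiE_eq_empty_iff)
  have "emeasure (marg J nu) (XA j s A) =
      emeasure (bind nuL (\<lambda>t. distr (K t) (PiM J (\<lambda>_. borel)) (\<lambda>y. merge L (J - L) (t, y)))) (XA j s A)"
    by (simp only: bindeq[symmetric])
  also have "\<dots> = (\<integral>\<^sup>+t. emeasure (distr (K t) (PiM J (\<lambda>_. borel)) (\<lambda>y. merge L (J - L) (t, y))) (XA j s A) \<partial>nuL)"
    by (rule emeasure_bind[OF ne kernel_meas XA_sets[OF j A]])
  also have "\<dots> = (\<integral>\<^sup>+t. emeasure (K t) {y\<in>space (K t). y j \<le> s} * indicator (PiE L A) t \<partial>nuL)"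
  proof (rule nn_integral_cong)
    fix t assume t: "t \<in> space nuL"
    have "emeasure (distr (K t) (PiM J (\<lambda>_. borel)) (\<lambda>y. merge L (J - L) (t, y))) (XA j s A)
        = emeasure (K t) ((\<lambda>y. merge L (J - L) (t, y)) -` XA j s A \<inter> space (K t))"
      by (rule emeasure_distr[OF merge_meas[OF t] XA_sets[OF j A]])
    also have "(\<lambda>y. merge L (J - L) (t, y)) -` XA j s A \<inter> space (K t)
        = (if t \<in> PiE L A then {y\<in>space (K t). y j \<le> s} else {})"
    proof -
      have tL: "t \<in> PiE L (\<lambda>_. UNIV)" using t nuL(3) by simp
      have "merge L (J - L) (t, y) \<in> XA j s A \<longleftrightarrow> t \<in> PiE L A \<and> y j \<le> s" if y: "y \<in> PiE (J - L) (\<lambda>_. UNIV)" for y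
      proof -
        have r: "restrict (merge L (J - L) (t, y)) L = t"
          using tL by (auto simp: merge_def restrict_def fun_eq_iff PiE_def extensional_def)
        have "merge L (J - L) (t, y) \<in> space (PiM J (\<lambda>_. borel :: real measure))"
          unfolding space_PiM using LM by (auto simp: merge_def PiE_def extensional_def)
        moreover have "merge L (J - L) (t, y) j = y j" using j by (simp add: merge_def)
        ultimately show ?thesis unfolding XA_def r using tL by (auto simp: PiE_def Pi_def)
      qed
      then show ?thesis using Kt(3)[OF t] by auto
    qed
    also have "emeasure (K t) \<dots> = emeasure (K t) {y\<in>space (K t). y j \<le> s} * indicator (PiE L A) t"
      by (simp add: indicator_def)
    finally show "emeasure (distr (K t) (PiM J (\<lambda>_. borel)) (\<lambda>y. merge L (J - L) (t, y))) (XA j s A)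
        = emeasure (K t) {y\<in>space (K t). y j \<le> s} * indicator (PiE L A) t" .
  qed
  finally show ?thesis .
qed

end


context sctx
begin

lemma C1:
  assumes j: "j \<in> J - L" and A: "\<And>i. i \<in> L \<Longrightarrow> A i \<in> sets borel"
  shows "emeasure (marg J nu) (XA j s A) = (\<integral>\<^sup>+t. ennreal (F0 L j s t) * indicator (PiE L A) t \<partial>nuL)"
proof -
  define AJ where "AJ = (\<lambda>i. if i \<in> J then (if i \<in> L then A i else if i = j then {..s} else UNIV) else UNIV)"
  have jD: "j \<in> {1..d}" "j \<notin> L" using j J by auto
  obtain l0 where l0: "l0 \<in> L" using Lne by auto
  have l0D: "l0 \<in> {1..d}" using l0 LD by auto
  have "emeasure (marg J nu) (XA j s A) = emeasure (marg J nu) (PiE J (\<lambda>i. if i \<in> L then A i else if i = j then {..s} else UNIV))"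
    unfolding XA_eq[OF j] ..
  also have "\<dots> = ennreal (Qs AJ)"
    unfolding AJ_def using A by (intro marg_box[OF J]) auto
  finally have lhs: "emeasure (marg J nu) (XA j s A) = ennreal (Qs AJ)" .
  define BLA where "BLA c = (\<lambda>i. if i \<in> L then Iv c i \<inter> A i else UNIV)" for c
  have BLm: "BL L c \<inter> PiE L A \<in> sets nuL" for c
  proof -
    have "BL L c \<inter> PiE L A = PiE L (\<lambda>l. Iv c l \<inter> A l)" unfolding BL_def by (auto simp: PiE_def Pi_def)
    also have "\<dots> \<in> sets (PiM L (\<lambda>_. borel))" using A finL by (intro sets_PiM_I_finite) auto
    finally show ?thesis using nuL(2) by simp
  qed
  have "(\<integral>\<^sup>+t. ennreal (F0 L j s t) * indicator (PiE L A) t \<partial>nuL)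
      = (\<integral>\<^sup>+t. (\<Sum>c\<in>cells. ennreal (Gc c j s) * indicator (BL L c \<inter> PiE L A) t) \<partial>nuL)"
  proof (rule nn_integral_cong)
    fix t
    have "ennreal (F0 L j s t) * indicator (PiE L A) t = ennreal (F0 L j s t * indicator (PiE L A) t)"
      using F0_nonneg by (simp add: ennreal_mult' ennreal_indicator[symmetric])
    also have "F0 L j s t * indicator (PiE L A) t = (\<Sum>c\<in>cells. Gc c j s * indicator (BL L c \<inter> PiE L A) t)"
      unfolding F0_def sum_distrib_right by (intro sum.cong) (auto simp: indicator_def)
    also have "ennreal \<dots> = (\<Sum>c\<in>cells. ennreal (Gc c j s * indicator (BL L c \<inter> PiE L A) t))"
      by (rule sum_ennreal[symmetric]) (auto intro!: mult_nonneg_nonneg Gc_nonneg)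
    also have "\<dots> = (\<Sum>c\<in>cells. ennreal (Gc c j s) * indicator (BL L c \<inter> PiE L A) t)"
      by (intro sum.cong) (auto simp: indicator_def)
    finally show "ennreal (F0 L j s t) * indicator (PiE L A) t = (\<Sum>c\<in>cells. ennreal (Gc c j s) * indicator (BL L c \<inter> PiE L A) t)" .
  qed
  also have "\<dots> = (\<Sum>c\<in>cells. ennreal (Gc c j s) * emeasure nuL (BL L c \<inter> PiE L A))"
    using BLm by (subst nn_integral_sum) (auto simp: nn_integral_cmult_indicator)
  also have "\<dots> = (\<Sum>c\<in>cells. ennreal (Gc c j s * ((\<Prod>i\<in>{1..d}. measure lborel (Iv c i \<inter> BLA c i)) / w c ^ (d - 1))))"
  proof (rule sum.cong)
    fix c assume c: "c \<in> cells"
    have "BL L c \<inter> PiE L A = PiE L (\<lambda>l. Iv c l \<inter> A l)" unfolding BL_def by (auto simp: PiE_def Pi_def)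
    then have "emeasure nuL (BL L c \<inter> PiE L A) = ennreal (Qs (\<lambda>i. if i \<in> L then Iv c i \<inter> A i else UNIV))"
      using A by (simp add: marg_box[OF LD])
    also have "Qs (\<lambda>i. if i \<in> L then Iv c i \<inter> A i else UNIV) = (\<Prod>i\<in>{1..d}. measure lborel (Iv c i \<inter> BLA c i)) / w c ^ (d - 1)"
      unfolding BLA_def using l0 by (intro Qs_single[OF c l0D]) auto
    finally have e: "emeasure nuL (BL L c \<inter> PiE L A) = ennreal ((\<Prod>i\<in>{1..d}. measure lborel (Iv c i \<inter> BLA c i)) / w c ^ (d - 1))" .
    have nn: "0 \<le> (\<Prod>i\<in>{1..d}. measure lborel (Iv c i \<inter> BLA c i)) / w c ^ (d - 1)"
      by (intro divide_nonneg_nonneg prod_nonneg zero_le_power w_nonneg) auto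
    show "ennreal (Gc c j s) * emeasure nuL (BL L c \<inter> PiE L A)
        = ennreal (Gc c j s * ((\<Prod>i\<in>{1..d}. measure lborel (Iv c i \<inter> BLA c i)) / w c ^ (d - 1)))"
      unfolding e by (rule ennreal_mult[symmetric, OF Gc_nonneg nn])
  qed simp
  also have "\<dots> = ennreal (\<Sum>c\<in>cells. Gc c j s * ((\<Prod>i\<in>{1..d}. measure lborel (Iv c i \<inter> BLA c i)) / w c ^ (d - 1)))"
    by (rule sum_ennreal) (auto intro!: mult_nonneg_nonneg Gc_nonneg divide_nonneg_nonneg prod_nonneg zero_le_power w_nonneg)
  also have "(\<Sum>c\<in>cells. Gc c j s * ((\<Prod>i\<in>{1..d}. measure lborel (Iv c i \<inter> BLA c i)) / w c ^ (d - 1))) = Qs AJ"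
    unfolding Qs_def
  proof (rule sum.cong)
    fix c assume c: "c \<in> cells"
    define g where "g i = measure lborel (Iv c i \<inter> BLA c i)" for i
    define b where "b = measure lborel (Iv c j \<inter> {..s})"
    have p1: "(\<Prod>i\<in>{1..d}. measure lborel (Iv c i \<inter> BLA c i)) = w c * (\<Prod>i\<in>{1..d} - {j}. g i)"
    proof -
      have "(\<Prod>i\<in>{1..d}. measure lborel (Iv c i \<inter> BLA c i)) = (\<Prod>i\<in>{1..d}. if i = j then w c else g i)"
        using jD by (intro prod.cong) (auto simp: g_def BLA_def meas_Iv)
      then show ?thesis using prod_at[of "{1..d}" j] jD by simp
    qed
    have p2: "(\<Prod>i\<in>{1..d}. measure lborel (Iv c i \<inter> AJ i)) = b * (\<Prod>i\<in>{1..d} - {j}. g i)"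
    proof -
      have "(\<Prod>i\<in>{1..d}. measure lborel (Iv c i \<inter> AJ i)) = (\<Prod>i\<in>{1..d}. if i = j then b else g i)"
      proof (rule prod.cong)
        fix i assume "i \<in> {1..d}"
        show "measure lborel (Iv c i \<inter> AJ i) = (if i = j then b else g i)"
          using j LJ unfolding AJ_def g_def BLA_def b_def by (auto simp: Int_absorb meas_Iv)
      qed simp
      then show ?thesis using prod_at[of "{1..d}" j] jD by simp
    qed
    have "Gc c j s * w c = b"
    proof (cases "w c = 0")
      case True then show ?thesis unfolding Gc_def b_def using Iv_empty[OF True] by simp
    next
      case False then show ?thesis unfolding Gc_def b_def by simp
    qed
    then show "Gc c j s * ((\<Prod>i\<in>{1..d}. measure lborel (Iv c i \<inter> BLA c i)) / w c ^ (d - 1))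
        = (\<Prod>i\<in>{1..d}. measure lborel (Iv c i \<inter> AJ i)) / w c ^ (d - 1)"
      unfolding p1 p2 by (simp add: mult.assoc[symmetric])
  qed simp
  finally show ?thesis using lhs by simp
qed

end


context sctx
begin

lemma BL_sets_nuL[measurable]: "BL L c \<in> sets nuL"
  using BL_sets[OF LD] nuL(2) by simp

lemma F0_meas[measurable]: "(\<lambda>t. F0 L j s t) \<in> borel_measurable nuL"
  unfolding F0_def by measurable

lemma Sj_sets: "j \<in> J - L \<Longrightarrow> {y\<in>space (PiM (J - L) (\<lambda>_. borel :: real measure)). y j \<le> s} \<in> sets (PiM (J - L) (\<lambda>_. borel))"
proof -
  assume j: "j \<in> J - L"
  have "{y\<in>space (PiM (J - L) (\<lambda>_. borel :: real measure)). y j \<le> s} = PiE (J - L) (\<lambda>i. if i = j then {..s} else UNIV)"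
    unfolding space_PiM using j by (auto simp: PiE_def Pi_def)
  also have "\<dots> \<in> sets (PiM (J - L) (\<lambda>_. borel))" using finJ by (intro sets_PiM_I_finite) auto
  finally show ?thesis .
qed

lemma h1_meas:
  assumes j: "j \<in> J - L"
  shows "(\<lambda>t. emeasure (K t) {y\<in>space (K t). y j \<le> s}) \<in> borel_measurable nuL"
proof -
  let ?S = "{y\<in>space (PiM (J - L) (\<lambda>_. borel :: real measure)). y j \<le> s}"
  have "(\<lambda>t. emeasure (K t) ?S) \<in> borel_measurable nuL"
    by (rule measurable_compose[OF Kmeas' measurable_emeasure_subprob_algebra[OF Sj_sets[OF j]]])
  moreover have "emeasure (K t) {y\<in>space (K t). y j \<le> s} = emeasure (K t) ?S" if "t \<in> space nuL" for t
    using Kt(3)[OF that] by (simp add: space_PiM)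
  ultimately show ?thesis by (subst measurable_cong) auto
qed

lemma AE_cond:
  assumes j: "j \<in> J - L"
  shows "AE t in nuL. cond_df K j t s = F0 L j s t"
proof -
  interpret N: prob_space nuL using nuL(1) .
  interpret NJ: prob_space "marg J nu" using marg_props(1)[OF J] .
  let ?h = "\<lambda>t. emeasure (K t) {y\<in>space (K t). y j \<le> s}"
  let ?f = "\<lambda>t. ennreal (F0 L j s t)"
  have hm: "?h \<in> borel_measurable nuL" by (rule h1_meas[OF j])
  have fm: "?f \<in> borel_measurable nuL" by measurable
  have eqA: "emeasure (density nuL ?h) (PiE L A) = emeasure (density nuL ?f) (PiE L A)"
    if A: "\<And>i. i \<in> L \<Longrightarrow> A i \<in> sets borel" for A
  proof -
    have m: "PiE L A \<in> sets nuL" using A finL nuL(2) by (simp add: sets_PiM_I_finite)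
    have "emeasure (density nuL ?h) (PiE L A) = (\<integral>\<^sup>+t. ?h t * indicator (PiE L A) t \<partial>nuL)"
      by (rule emeasure_density[OF hm m])
    also have "\<dots> = emeasure (marg J nu) (XA j s A)" by (rule from_bind[OF j A, symmetric])
    also have "\<dots> = (\<integral>\<^sup>+t. ?f t * indicator (PiE L A) t \<partial>nuL)" by (rule C1[OF j A])
    also have "\<dots> = emeasure (density nuL ?f) (PiE L A)" by (rule emeasure_density[OF fm m, symmetric])
    finally show ?thesis .
  qed
  have "density nuL ?h = density nuL ?f"
  proof (rule measure_eqI_PiM_finite[where I=L and M="\<lambda>_. borel" and A="\<lambda>_. PiE L (\<lambda>_. UNIV)"])
    show "finite L" by (rule finL)
    show "sets (density nuL ?h) = sets (PiM L (\<lambda>_. borel))" using nuL(2) by simp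
    show "sets (density nuL ?f) = sets (PiM L (\<lambda>_. borel))" using nuL(2) by simp
    show "emeasure (density nuL ?h) (PiE L A) = emeasure (density nuL ?f) (PiE L A)"
      if "\<And>i. i \<in> L \<Longrightarrow> A i \<in> sets borel" for A using eqA that by simp
    show "range (\<lambda>_::nat. PiE L (\<lambda>_. UNIV :: real set)) \<subseteq> prod_algebra L (\<lambda>_. borel)"
      using finL by (auto intro!: prod_algebraI_finite)
    show "(\<Union>i::nat. PiE L (\<lambda>_. UNIV :: real set)) = space (PiM L (\<lambda>_. borel))" by (simp add: space_PiM)
    fix i :: nat
    have "emeasure (density nuL ?h) (PiE L (\<lambda>_. UNIV)) = emeasure (marg J nu) (XA j s (\<lambda>_. UNIV))"
    proof -
      have m: "PiE L (\<lambda>_. UNIV) \<in> sets nuL" using finL nuL(2) by (simp add: sets_PiM_I_finite)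
      have "emeasure (density nuL ?h) (PiE L (\<lambda>_. UNIV)) = (\<integral>\<^sup>+t. ?h t * indicator (PiE L (\<lambda>_. UNIV)) t \<partial>nuL)"
        by (rule emeasure_density[OF hm m])
      also have "\<dots> = emeasure (marg J nu) (XA j s (\<lambda>_. UNIV))" by (rule from_bind[OF j, symmetric]) auto
      finally show ?thesis .
    qed
    also have "\<dots> \<le> 1" by (rule NJ.emeasure_le_1)
    finally show "emeasure (density nuL ?h) (PiE L (\<lambda>_. UNIV)) \<noteq> \<infinity>"
      by (auto simp: top_unique)
  qed
  then have "AE t in nuL. ?h t = ?f t" by (rule N.density_unique[OF hm fm])
  then show ?thesis
  proof (eventually_elim)
    case (elim t)
    then show ?case unfolding cond_df_def measure_def using F0_nonneg by simp
  qed
qed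

end


lemma eq_on_rats:
  fixes F G :: "real \<Rightarrow> real"
  assumes F: "\<And>s. continuous (at_right s) F" and G: "continuous_on UNIV G"
    and eq: "\<And>q. q \<in> \<rat> \<Longrightarrow> F q = G q"
  shows "F = G"
proof
  fix s
  show "F s = G s"
  proof (rule ccontr)
    assume ne: "F s \<noteq> G s"
    define e where "e = \<bar>F s - G s\<bar> / 2"
    have e: "0 < e" using ne unfolding e_def by simp
    have "continuous (at s within {s<..}) F" using F[of s] .
    then obtain d1 where d1: "0 < d1" "\<And>x. x \<in> {s<..} \<Longrightarrow> dist x s < d1 \<Longrightarrow> dist (F x) (F s) < e"
      unfolding continuous_within_eps_delta using e by blast
    have "continuous (at s) G" using G by (simp add: continuous_on_eq_continuous_at)
    then obtain d2 where d2: "0 < d2" "\<And>x. dist x s < d2 \<Longrightarrow> dist (G x) (G s) < e"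
      unfolding continuous_at_eps_delta using e by blast
    obtain q where q: "q \<in> \<rat>" "s < q" "q < s + min d1 d2"
      using Rats_dense_in_real[of s "s + min d1 d2"] d1(1) d2(1) by auto
    have "dist q s < d1" "dist q s < d2" using q by (auto simp: dist_real_def)
    then have "\<bar>F q - F s\<bar> < e" "\<bar>G q - G s\<bar> < e" using d1(2)[of q] d2(2)[of q] q(2)
      by (auto simp: dist_real_def)
    moreover have "F q = G q" using eq[OF q(1)] .
    ultimately have "\<bar>F s - G s\<bar> < 2 * e" by linarith
    then show False unfolding e_def by simp
  qed
qed

context sctx
begin

lemma cdf_rc:
  assumes t: "t \<in> space nuL" and j: "j \<in> J - L"
  shows "continuous (at_right s) (cond_df K j t)"
proof -
  interpret Q: prob_space "K t" using Kt(1)[OF t] .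
  have rv: "(\<lambda>y. y j) \<in> measurable (K t) borel"
  proof -
    have "(\<lambda>y. y j) \<in> measurable (PiM (J - L) (\<lambda>_. borel)) (borel :: real measure)"
      using j by (rule measurable_component_singleton)
    then show ?thesis using Kt(2)[OF t] by (simp cong: measurable_cong_sets)
  qed
  interpret R: real_distribution "distr (K t) borel (\<lambda>y. y j)"
    using Q.real_distribution_distr[OF rv] .
  have "cond_df K j t = cdf (distr (K t) borel (\<lambda>y. y j))"
  proof
    fix x
    have "cdf (distr (K t) borel (\<lambda>y. y j)) x = measure (K t) ((\<lambda>y. y j) -` {..x} \<inter> space (K t))"
      unfolding cdf_def2 by (rule measure_distr[OF rv]) simp
    also have "(\<lambda>y. y j) -` {..x} \<inter> space (K t) = {y\<in>space (K t). y j \<le> x}" by auto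
    finally show "cond_df K j t x = cdf (distr (K t) borel (\<lambda>y. y j)) x" unfolding cond_df_def by simp
  qed
  then show ?thesis using R.cdf_is_right_cont by simp
qed

lemma Gc_cont: "continuous_on UNIV (Gc c j)"
proof -
  have "Gc c j = (\<lambda>s. max 0 (min (off j c + w c) s - off j c) * inverse (w c))"
    unfolding Gc_def Iv_def using w_nonneg[of c]
    by (auto simp: fun_eq_iff meas_Ioc_cut divide_inverse)
  moreover have "continuous_on UNIV (\<lambda>s. max 0 (min (off j c + w c) s - off j c) * inverse (w c))"
    by (intro continuous_intros)
  ultimately show ?thesis by simp
qed

lemma AE_boxes: "AE t in nuL. \<exists>c\<in>cells. t \<in> BL L c"
proof -
  interpret N: prob_space nuL using nuL(1) .
  obtain l0 where l0: "l0 \<in> L" using Lne by auto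
  have l0D: "l0 \<in> {1..d}" using l0 LD by auto
  have "emeasure nuL (\<Union>c\<in>cells. BL L c) = (\<Sum>c\<in>cells. emeasure nuL (BL L c))"
  proof -
    have disj: "disjoint_family_on (BL L) cells"
      unfolding disjoint_family_on_def using BL_disj[OF LD Lne] by blast
    show ?thesis using finite_cells disj by (intro sum_emeasure[symmetric]) auto
  qed
  also have "\<dots> = (\<Sum>c\<in>cells. ennreal (w c))"
  proof (rule sum.cong)
    fix c assume c: "c \<in> cells"
    have "emeasure nuL (BL L c) = ennreal (Qs (\<lambda>i. if i \<in> L then Iv c i else UNIV))"
      unfolding BL_def by (rule marg_box[OF LD]) simp
    also have "Qs (\<lambda>i. if i \<in> L then Iv c i else UNIV)
       = (\<Prod>i\<in>{1..d}. measure lborel (Iv c i \<inter> (if i \<in> L then Iv c i else UNIV))) / w c ^ (d - 1)"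
      using l0 by (intro Qs_single[OF c l0D]) auto
    also have "(\<Prod>i\<in>{1..d}. measure lborel (Iv c i \<inter> (if i \<in> L then Iv c i else UNIV))) = (\<Prod>i\<in>{1..d}. w c)"
      by (intro prod.cong refl) (simp add: meas_Iv)
    also have "\<dots> = w c ^ d" by simp
    finally show "emeasure nuL (BL L c) = ennreal (w c)" using pow_div_pred[OF d1] by simp
  qed simp
  also have "\<dots> = ennreal (\<Sum>c\<in>cells. w c)" by (rule sum_ennreal) (simp add: w_nonneg)
  also have "\<dots> = 1" using sum_w_all by simp
  finally have "N.prob (\<Union>c\<in>cells. BL L c) = 1" by (simp add: N.emeasure_eq_measure)
  then have "AE t in nuL. t \<in> (\<Union>c\<in>cells. BL L c)" by (rule N.AE_prob_1)
  then show ?thesis by auto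
qed

lemma U2:
  assumes j: "j \<in> J - L"
  shows "AE t in nuL. continuous_on UNIV (cond_df K j t)"
proof -
  have "AE t in nuL. \<forall>q\<in>\<rat>. cond_df K j t q = F0 L j q t"
    using AE_cond[OF j] by (subst AE_ball_countable) (auto intro: countable_rat)
  with AE_boxes AE_space show ?thesis
  proof (eventually_elim)
    case (elim t)
    then obtain c where c: "c \<in> cells" "t \<in> BL L c" by auto
    have "cond_df K j t = Gc c j"
    proof (rule eq_on_rats)
      show "continuous (at_right s) (cond_df K j t)" for s using cdf_rc[OF _ j] elim by simp
      show "continuous_on UNIV (Gc c j)" by (rule Gc_cont)
      show "cond_df K j t q = Gc c j q" if "q \<in> \<rat>" for q
        using elim that F0_in[OF LD Lne c] by simp
    qed
    then show ?case using Gc_cont by simp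
  qed
qed

end


lemma ennreal_div1[simp]: "(x::ennreal) / 1 = x" by (simp add: divide_ennreal_def)

abbreviation U01 :: "real measure" where "U01 \<equiv> uniform_measure lborel {0..1}"

definition Pi01 :: "nat set \<Rightarrow> (nat \<Rightarrow> real) measure" where
  "Pi01 S = PiM S (\<lambda>_. U01)"

lemma U01_prob: "prob_space U01"
  by (intro prob_space_uniform_measure) auto

lemma U01_emeasure: "B \<in> sets borel \<Longrightarrow> emeasure U01 B = emeasure lborel ({0..1} \<inter> B)"
  by (subst emeasure_uniform_measure) (auto simp: divide_ennreal_def)

lemma U01_atMost: "0 \<le> v \<Longrightarrow> v \<le> 1 \<Longrightarrow> emeasure U01 {..v} = ennreal v"
proof -
  assume v: "0 \<le> v" "v \<le> 1"
  have "{0..1} \<inter> {..v} = {0..v}" using v by auto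
  then show ?thesis using v by (simp add: U01_emeasure divide_ennreal_def)
qed

lemma U01_UNIV: "emeasure U01 UNIV = 1"
proof -
  interpret prob_space U01 by (rule U01_prob)
  show ?thesis using emeasure_space_1 by simp
qed

lemma Pi01_box:
  assumes "finite S" "\<And>i. i \<in> S \<Longrightarrow> A i \<in> sets borel"
  shows "emeasure (Pi01 S) (PiE S A) = (\<Prod>i\<in>S. emeasure U01 (A i))"
proof -
  interpret U: prob_space U01 by (rule U01_prob)
  interpret P: product_sigma_finite "\<lambda>_::nat. U01" by standard
  show ?thesis unfolding Pi01_def using assms by (intro P.emeasure_PiM) auto
qed

lemma Pi01_space: "space (Pi01 S) = PiE S (\<lambda>_. UNIV)"
  unfolding Pi01_def by (simp add: space_PiM)

lemma Pi01_copula: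
  assumes S: "finite S"
  shows "copula_on S (Pi01 S)"
  unfolding copula_on_def
proof (intro conjI ballI)
  show "prob_space (Pi01 S)" unfolding Pi01_def by (intro prob_space_PiM U01_prob)
  show "sets (Pi01 S) = sets (PiM S (\<lambda>_. borel))" unfolding Pi01_def by (intro sets_PiM_cong) auto
  fix i s assume i: "i \<in> S" and s: "s \<in> {0..1::real}"
  have eq: "{x\<in>space (Pi01 S). x i \<le> s} = PiE S (\<lambda>k. if k = i then {..s} else UNIV)"
    unfolding Pi01_space using i by (auto simp: PiE_def Pi_def)
  have "emeasure (Pi01 S) {x\<in>space (Pi01 S). x i \<le> s} = (\<Prod>k\<in>S. emeasure U01 (if k = i then {..s} else UNIV))"
    unfolding eq using S by (intro Pi01_box) auto
  also have "\<dots> = (\<Prod>k\<in>S. if k = i then ennreal s else 1)"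
    using s by (intro prod.cong) (auto simp: U01_atMost U01_UNIV)
  also have "\<dots> = ennreal s * (\<Prod>k\<in>S - {i}. 1)" by (rule prod_at[OF S i])
  finally show "measure (Pi01 S) {x\<in>space (Pi01 S). x i \<le> s} = s"
    using s by (intro measure_eq_emeasure_eq_ennreal) auto
qed

lemma Pi01_cdf:
  assumes S: "finite S" and v: "\<And>i. i \<in> S \<Longrightarrow> 0 \<le> v i \<and> v i \<le> 1"
  shows "cdf_on S (Pi01 S) v = (\<Prod>i\<in>S. v i)"
proof -
  have eq: "{x\<in>space (Pi01 S). \<forall>i\<in>S. x i \<le> v i} = PiE S (\<lambda>i. {..v i})"
    unfolding Pi01_space by (auto simp: PiE_def Pi_def)
  have "emeasure (Pi01 S) (PiE S (\<lambda>i. {..v i})) = (\<Prod>i\<in>S. emeasure U01 {..v i})"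
    using S by (intro Pi01_box) auto
  also have "\<dots> = (\<Prod>i\<in>S. ennreal (v i))" using v by (intro prod.cong) (auto simp: U01_atMost)
  also have "\<dots> = ennreal (\<Prod>i\<in>S. v i)" using v by (intro prod_ennreal) auto
  finally show ?thesis unfolding cdf_on_def eq
    using v by (intro measure_eq_emeasure_eq_ennreal prod_nonneg) auto
qed


context sctx
begin

lemma finM: "finite (J - L)" using finJ by simp

lemma cond_df_meas: "j \<in> J - L \<Longrightarrow> (\<lambda>t. cond_df K j t s) \<in> borel_measurable nuL"
  unfolding cond_df_def measure_def by (intro borel_measurable_enn2real h1_meas)

lemma cond_df_01:
  assumes "t \<in> space nuL" shows "0 \<le> cond_df K j t s" "cond_df K j t s \<le> 1"
proof -
  interpret Q: prob_space "K t" using Kt(1)[OF assms] .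
  show "0 \<le> cond_df K j t s" "cond_df K j t s \<le> 1" unfolding cond_df_def by auto
qed

lemma per_cell:
  assumes c: "c \<in> cells" and u: "\<And>i. i \<in> J \<Longrightarrow> 0 \<le> u i"
  shows "(\<Prod>j\<in>J - L. Gc c j (u j)) * (\<Prod>i\<in>{1..d}. if i \<in> L then measure lborel (Iv c i \<inter> {..u i}) else w c)
       = (\<Prod>i\<in>{1..d}. if i \<in> J then measure lborel (Iv c i \<inter> {..u i}) else w c)"
proof -
  define a where "a i = measure lborel (Iv c i \<inter> {..u i})" for i
  define g1 where "g1 i = (if i \<in> L then a i else w c)" for i
  define g2 where "g2 i = (if i \<in> J then a i else w c)" for i
  have sub: "J - L \<subseteq> {1..d}" using J by auto
  have P1: "(\<Prod>i\<in>{1..d}. g1 i) = (\<Prod>i\<in>{1..d} - (J - L). g1 i) * w c ^ card (J - L)"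
  proof -
    have "(\<Prod>i\<in>{1..d}. g1 i) = (\<Prod>i\<in>{1..d} - (J - L). g1 i) * (\<Prod>i\<in>J - L. g1 i)"
      by (rule prod.subset_diff[OF sub]) simp
    also have "(\<Prod>i\<in>J - L. g1 i) = (\<Prod>i\<in>J - L. w c)" by (intro prod.cong) (auto simp: g1_def)
    finally show ?thesis by simp
  qed
  have P2: "(\<Prod>i\<in>{1..d}. g2 i) = (\<Prod>i\<in>{1..d} - (J - L). g1 i) * (\<Prod>i\<in>J - L. a i)"
  proof -
    have "(\<Prod>i\<in>{1..d}. g2 i) = (\<Prod>i\<in>{1..d} - (J - L). g2 i) * (\<Prod>i\<in>J - L. g2 i)"
      by (rule prod.subset_diff[OF sub]) simp
    also have "(\<Prod>i\<in>{1..d} - (J - L). g2 i) = (\<Prod>i\<in>{1..d} - (J - L). g1 i)"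
      using LJ by (intro prod.cong) (auto simp: g1_def g2_def)
    also have "(\<Prod>i\<in>J - L. g2 i) = (\<Prod>i\<in>J - L. a i)" by (intro prod.cong) (auto simp: g2_def)
    finally show ?thesis .
  qed
  have "(\<Prod>j\<in>J - L. Gc c j (u j)) * (\<Prod>i\<in>{1..d}. g1 i) = (\<Prod>i\<in>{1..d}. g2 i)"
  proof (cases "w c = 0")
    case True
    obtain j0 where j0: "j0 \<in> J - L" using Mne by auto
    obtain l0 where l0: "l0 \<in> L" using Lne by auto
    have "(\<Prod>j\<in>J - L. Gc c j (u j)) = 0"
      using j0 finM by (intro prod_zero bexI[of _ j0]) (auto simp: Gc_def True)
    moreover have "(\<Prod>i\<in>{1..d}. g2 i) = 0"
      using l0 LD LJ by (intro prod_zero bexI[of _ l0]) (auto simp: g2_def a_def Iv_empty[OF True])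
    ultimately show ?thesis by simp
  next
    case False
    have "(\<Prod>j\<in>J - L. Gc c j (u j)) = (\<Prod>j\<in>J - L. a j) / w c ^ card (J - L)"
      unfolding Gc_def a_def by (simp add: prod_dividef)
    then show ?thesis unfolding P1 P2 using False by simp
  qed
  then show ?thesis unfolding g1_def g2_def a_def .
qed

end


context sctx
begin

lemma U1:
  assumes u: "u \<in> cube J"
  shows "cdf_on J (marg J nu) u =
    (\<integral>t. indicator {t. \<forall>l\<in>L. 0 \<le> t l \<and> t l \<le> u l} t *
         cdf_on (J - L) (Pi01 (J - L)) (\<lambda>j. cond_df K j t (u j)) \<partial>nuL)"
proof -
  interpret N: prob_space nuL using nuL(1) .
  define S where "S = {t. \<forall>l\<in>L. 0 \<le> t l \<and> t l \<le> u l}"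
  have u01: "0 \<le> u i" "u i \<le> 1" if "i \<in> J" for i using u that unfolding cube_def by auto
  obtain l0 where l0: "l0 \<in> L" using Lne by auto
  have l0D: "l0 \<in> {1..d}" using l0 LD by auto
  define a where "a c i = measure lborel (Iv c i \<inter> {..u i})" for c i
  define k where "k c = (\<Prod>j\<in>J - L. Gc c j (u j))" for c
  have Ssp: "S \<inter> space nuL = PiE L (\<lambda>l. {0..u l})" unfolding S_def nuL(3) by (auto simp: PiE_def Pi_def)
  have Sm: "S \<inter> space nuL \<in> sets nuL" unfolding Ssp using finL nuL(2) by (simp add: sets_PiM_I_finite)
  have SBm: "S \<inter> BL L c \<inter> space nuL \<in> sets nuL" for c
  proof -
    have "S \<inter> BL L c \<inter> space nuL = (S \<inter> space nuL) \<inter> BL L c" by auto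
    then show ?thesis using Sm by simp
  qed
  have indS: "(indicator S :: _ \<Rightarrow> real) \<in> borel_measurable nuL" using Sm by (simp add: borel_measurable_indicator_iff)
  have indSB: "(indicator (S \<inter> BL L c) :: _ \<Rightarrow> real) \<in> borel_measurable nuL" for c
    using SBm[of c] by (simp add: borel_measurable_indicator_iff Int_assoc)
  have "(\<integral>t. indicator S t * cdf_on (J - L) (Pi01 (J - L)) (\<lambda>j. cond_df K j t (u j)) \<partial>nuL)
      = (\<integral>t. indicator S t * (\<Prod>j\<in>J - L. cond_df K j t (u j)) \<partial>nuL)"
  proof (rule Bochner_Integration.integral_cong[OF refl])
    fix t assume t: "t \<in> space nuL"
    show "indicator S t * cdf_on (J - L) (Pi01 (J - L)) (\<lambda>j. cond_df K j t (u j))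
        = indicator S t * (\<Prod>j\<in>J - L. cond_df K j t (u j))"
      using cond_df_01[OF t] by (subst Pi01_cdf[OF finM]) auto
  qed
  also have "\<dots> = (\<integral>t. indicator S t * (\<Prod>j\<in>J - L. F0 L j (u j) t) \<partial>nuL)"
  proof (rule integral_cong_AE)
    show "(\<lambda>t. indicator S t * (\<Prod>j\<in>J - L. cond_df K j t (u j))) \<in> borel_measurable nuL"
      using indS cond_df_meas by (intro borel_measurable_times borel_measurable_prod) auto
    show "(\<lambda>t. indicator S t * (\<Prod>j\<in>J - L. F0 L j (u j) t)) \<in> borel_measurable nuL"
      using indS by (intro borel_measurable_times borel_measurable_prod) auto
    have "AE t in nuL. \<forall>j\<in>J - L. cond_df K j t (u j) = F0 L j (u j) t"
      using finM AE_cond by (intro AE_finite_allI) auto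
    then show "AE t in nuL. indicator S t * (\<Prod>j\<in>J - L. cond_df K j t (u j)) = indicator S t * (\<Prod>j\<in>J - L. F0 L j (u j) t)"
      by eventually_elim simp
  qed
  also have "\<dots> = (\<integral>t. (\<Sum>c\<in>cells. indicator (S \<inter> BL L c) t * k c) \<partial>nuL)"
  proof (rule Bochner_Integration.integral_cong[OF refl])
    fix t
    show "indicator S t * (\<Prod>j\<in>J - L. F0 L j (u j) t) = (\<Sum>c\<in>cells. indicator (S \<inter> BL L c) t * k c)"
    proof (cases "\<exists>c\<in>cells. t \<in> BL L c")
      case True
      then obtain c0 where c0: "c0 \<in> cells" "t \<in> BL L c0" by auto
      have "(\<Prod>j\<in>J - L. F0 L j (u j) t) = k c0" unfolding k_def
        using F0_in[OF LD Lne c0] by simp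
      moreover have "(\<Sum>c\<in>cells. indicator (S \<inter> BL L c) t * k c) = indicator (S \<inter> BL L c0) t * k c0"
      proof -
        have "(\<Sum>c\<in>cells. indicator (S \<inter> BL L c) t * k c) = indicator (S \<inter> BL L c0) t * k c0 +
            (\<Sum>c\<in>cells - {c0}. indicator (S \<inter> BL L c) t * k c)"
          using c0 finite_cells by (subst sum.remove) auto
        also have "(\<Sum>c\<in>cells - {c0}. indicator (S \<inter> BL L c) t * k c) = 0"
          using BL_disj[OF LD Lne c0(1)] c0(2) by (intro sum.neutral) (auto simp: indicator_def)
        finally show ?thesis by simp
      qed
      ultimately show ?thesis using c0 by (simp add: indicator_def)
    next
      case False
      obtain j0 where j0: "j0 \<in> J - L" using Mne by auto
      have "F0 L j0 (u j0) t = 0" using False by (intro F0_out) auto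
      then have "(\<Prod>j\<in>J - L. F0 L j (u j) t) = 0"
        using j0 finM by (intro prod_zero bexI[of _ j0]) auto
      moreover have "(\<Sum>c\<in>cells. indicator (S \<inter> BL L c) t * k c) = 0"
        using False by (intro sum.neutral) (auto simp: indicator_def)
      ultimately show ?thesis by simp
    qed
  qed
  also have "\<dots> = (\<Sum>c\<in>cells. measure nuL (S \<inter> BL L c \<inter> space nuL) * k c)"
  proof -
    have int: "integrable nuL (\<lambda>t. indicator (S \<inter> BL L c) t * k c)" for c
    proof (rule N.integrable_const_bound[where B="\<bar>k c\<bar>"])
      show "AE t in nuL. norm (indicator (S \<inter> BL L c) t * k c) \<le> \<bar>k c\<bar>"
        by (auto simp: indicator_def)
      show "(\<lambda>t. indicator (S \<inter> BL L c) t * k c) \<in> borel_measurable nuL"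
        using indSB[of c] by simp
    qed
    have "(\<integral>t. (\<Sum>c\<in>cells. indicator (S \<inter> BL L c) t * k c) \<partial>nuL)
        = (\<Sum>c\<in>cells. (\<integral>t. indicator (S \<inter> BL L c) t * k c \<partial>nuL))"
      by (rule Bochner_Integration.integral_sum) (rule int)
    also have "\<dots> = (\<Sum>c\<in>cells. measure nuL (S \<inter> BL L c \<inter> space nuL) * k c)"
      by (simp add: Int_assoc)
    finally show ?thesis .
  qed
  also have "\<dots> = (\<Sum>c\<in>cells. (\<Prod>i\<in>{1..d}. if i \<in> J then a c i else w c) / w c ^ (d - 1))"
  proof (rule sum.cong[OF refl])
    fix c assume c: "c \<in> cells"
    have eqS: "S \<inter> BL L c \<inter> space nuL = PiE L (\<lambda>l. {0..u l} \<inter> Iv c l)"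
      unfolding S_def BL_def nuL(3) by (auto simp: PiE_def Pi_def)
    have "emeasure nuL (S \<inter> BL L c \<inter> space nuL) = ennreal (Qs (\<lambda>i. if i \<in> L then {0..u i} \<inter> Iv c i else UNIV))"
      unfolding eqS by (rule marg_box[OF LD]) auto
    also have "Qs (\<lambda>i. if i \<in> L then {0..u i} \<inter> Iv c i else UNIV)
       = (\<Prod>i\<in>{1..d}. measure lborel (Iv c i \<inter> (if i \<in> L then {0..u i} \<inter> Iv c i else UNIV))) / w c ^ (d - 1)"
      using l0 by (intro Qs_single[OF c l0D]) auto
    also have "(\<Prod>i\<in>{1..d}. measure lborel (Iv c i \<inter> (if i \<in> L then {0..u i} \<inter> Iv c i else UNIV)))
       = (\<Prod>i\<in>{1..d}. if i \<in> L then a c i else w c)"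
    proof (rule prod.cong[OF refl])
      fix i assume i: "i \<in> {1..d}"
      have "Iv c i \<inter> ({0..u i} \<inter> Iv c i) = Iv c i \<inter> {..u i}"
        using Iv_sub01[OF c i] by auto
      then show "measure lborel (Iv c i \<inter> (if i \<in> L then {0..u i} \<inter> Iv c i else UNIV)) = (if i \<in> L then a c i else w c)"
        unfolding a_def by (simp add: meas_Iv)
    qed
    finally have "measure nuL (S \<inter> BL L c \<inter> space nuL) = (\<Prod>i\<in>{1..d}. if i \<in> L then a c i else w c) / w c ^ (d - 1)"
      by (intro measure_eq_emeasure_eq_ennreal divide_nonneg_nonneg prod_nonneg zero_le_power w_nonneg)
         (auto simp: a_def w_nonneg)
    then show "measure nuL (S \<inter> BL L c \<inter> space nuL) * k c = (\<Prod>i\<in>{1..d}. if i \<in> J then a c i else w c) / w c ^ (d - 1)"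
      using per_cell[OF c u01(1)] unfolding k_def a_def by (simp add: mult.commute)
  qed
  also have "\<dots> = cdf_on J (marg J nu) u"
  proof -
    have eqJ: "{x\<in>space (marg J nu). \<forall>i\<in>J. x i \<le> u i} = PiE J (\<lambda>i. {..u i})"
      unfolding marg_props(3)[OF J] by (auto simp: PiE_def Pi_def)
    have "emeasure (marg J nu) (PiE J (\<lambda>i. {..u i})) = ennreal (Qs (\<lambda>i. if i \<in> J then {..u i} else UNIV))"
      by (rule marg_box[OF J]) auto
    also have "Qs (\<lambda>i. if i \<in> J then {..u i} else UNIV) = (\<Sum>c\<in>cells. (\<Prod>i\<in>{1..d}. if i \<in> J then a c i else w c) / w c ^ (d - 1))"
      unfolding Qs_def a_def by (intro sum.cong refl arg_cong2[where f="(/)"] prod.cong) (auto simp: meas_Iv)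
    finally show ?thesis unfolding cdf_on_def eqJ
      by (intro measure_eq_emeasure_eq_ennreal[symmetric] sum_nonneg divide_nonneg_nonneg prod_nonneg zero_le_power w_nonneg)
         (auto simp: a_def w_nonneg)
  qed
  finally show ?thesis unfolding S_def by simp
qed

end


context constr
begin

lemma univ_nu: "univ_simplified d nu"
  unfolding univ_simplified_def
proof (intro allI impI)
  fix J L K
  assume H: "J \<subseteq> {1..d} \<and> 2 \<le> card J \<and> L \<subseteq> J \<and> 1 \<le> card L \<and> card L \<le> card J - 2 \<and>
       is_rcd L (J - L) (marg J nu) K"
  then have J: "J \<subseteq> {1..d}" and LJ: "L \<subseteq> J" and rcd: "is_rcd L (J - L) (marg J nu) K"
    and cJ: "2 \<le> card J" and cL: "1 \<le> card L" "card L \<le> card J - 2" by auto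
  have finJ: "finite J" using J finite_subset by blast
  have finL: "finite L" using finJ LJ finite_subset by blast
  have Lne: "L \<noteq> {}" using cL by auto
  have Mne: "J - L \<noteq> {}"
  proof
    assume "J - L = {}"
    then have "J = L" using LJ by auto
    then show False using cJ cL by simp
  qed
  interpret S: sctx d n \<mu> J L K
    by unfold_locales (use J LJ Lne Mne rcd in auto)
  show "(\<exists>A. copula_on (J - L) A \<and>
          (\<forall>u\<in>cube J. cdf_on J (marg J nu) u =
             (\<integral>t. indicator {t. \<forall>l\<in>L. 0 \<le> t l \<and> t l \<le> u l} t *
                    cdf_on (J - L) A (\<lambda>j. cond_df K j t (u j)) \<partial>(marg L nu)))) \<and>
       (\<forall>j\<in>J - L. AE t in marg L nu. continuous_on UNIV (cond_df K j t))"
  proof (intro conjI exI[of _ "Pi01 (J - L)"] ballI)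
    show "copula_on (J - L) (Pi01 (J - L))" by (rule Pi01_copula[OF S.finM])
    fix u assume "u \<in> cube J"
    then show "cdf_on J (marg J nu) u =
             (\<integral>t. indicator {t. \<forall>l\<in>L. 0 \<le> t l \<and> t l \<le> u l} t *
                    cdf_on (J - L) (Pi01 (J - L)) (\<lambda>j. cond_df K j t (u j)) \<partial>(marg L nu))"
      by (rule S.U1)
  next
    fix j assume "j \<in> J - L"
    then show "AE t in marg L nu. continuous_on UNIV (cond_df K j t)" by (rule S.U2)
  qed
qed

end

theorem corollary7p2:
  fixes d :: nat
  assumes "3 \<le> d"
  shows "\<forall>\<mu>. copula_on {1..d} \<mu> \<longrightarrow>
           (\<forall>\<epsilon>>0. \<exists>\<nu>. copula_on {1..d} \<nu> \<and> univ_simplified d \<nu> \<and> copula_dist d \<mu> \<nu> < \<epsilon>)"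
proof (intro allI impI)
  fix \<mu> :: "(nat \<Rightarrow> real) measure" and \<epsilon> :: real
  assume cop: "copula_on {1..d} \<mu>" and e: "0 < \<epsilon>"
  obtain n :: nat where n: "real d / \<epsilon> < real n" using reals_Archimedean2 by blast
  have d0: "0 < real d" using assms by simp
  have "0 < real d / \<epsilon>" using d0 e by simp
  then have n0: "0 < n" using n by linarith
  have dn: "real d / real n < \<epsilon>"
  proof -
    have "real d < real n * \<epsilon>" using n e by (simp add: divide_less_eq)
    then show ?thesis using n0 by (simp add: divide_less_eq mult.commute)
  qed
  interpret C: constr d n \<mu>
    by unfold_locales (use assms n0 cop in auto)
  show "\<exists>\<nu>. copula_on {1..d} \<nu> \<and> univ_simplified d \<nu> \<and> copula_dist d \<mu> \<nu> < \<epsilon>"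
    using C.copula_nu C.univ_nu C.dist_nu dn by (intro exI[of _ C.nu]) auto
qed


end
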